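(* Let $\sigma\in S_n$, $a\in\{1,\dots,n-1\}$, $I\in\mathcal I_\lambda$, and suppose $\sigma(a)\in I_k$, $\sigma(a+1)\in I_l$. Write $\sigma s_{a,a+1}$ for the permutation $m\mapsto\sigma(s_{a,a+1}(m))$ and $I'=s_{\sigma(a),\sigma(a+1)}(I)$. Then, with $w=z_{\sigma(a)}/z_{\sigma(a+1)}$: if $k=l$, $W_{\sigma s_{a,a+1},I}=W_{\sigma,I}$; if $k<l$, $W_{\sigma s_{a,a+1},I}=h\frac{1-w}{1-hw}W_{\sigma,I}+\frac{1-h}{1-hw}W_{\sigma,I'}$; if $k>l$, $W_{\sigma s_{a,a+1},I}=\frac{1-w}{1-hw}W_{\sigma,I}+(1-h)\frac{w}{1-hw}W_{\sigma,I'}$.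
   Context: Fix $N,n$, $\lambda\in\mathbb Z_{\ge0}^N$, $\sum\lambda_k=n$; $\lambda^{(k)}=\lambda_1+\dots+\lambda_k$, $\lambda^{\{1\}}=\sum_{k=1}^{N-1}\lambda^{(k)}$. $\mathcal I_\lambda$ = ordered partitions $I=(I_1,\dots,I_N)$ of $\{1,\dots,n\}$ with $|I_k|=\lambda_k$; $I_1\cup\dots\cup I_k=\{i^{(k)}_1<\dots<i^{(k)}_{\lambda^{(k)}}\}$; for $\tau\in S_n$, $\tau(I)=(\tau(I_1),\dots,\tau(I_N))$; $s_{a,b}$ denotes the transposition of $a$ and $b$. Weight functions: variables $t^{(k)}_a$ ($1\le k\le N-1$), $z_1,\dots,z_n$, $h$, $t^{(N)}_a=z_a$; $U_I=\prod_{k=1}^{N-1}\prod_{a=1}^{\lambda^{(k)}}\Big(\prod_{c:\,i^{(k+1)}_c<i^{(k)}_a}(1-ht^{(k+1)}_c/t^{(k)}_a)\prod_{c:\,i^{(k+1)}_c>i^{(k)}_a}(1-t^{(k+1)}_c/t^{(k)}_a)\prod_{b=a+1}^{\lambda^{(k)}}\frac{1-ht^{(k)}_b/t^{(k)}_a}{1-t^{(k)}_b/t^{(k)}_a}\Big)$ ($c\in\{1..\lambda^{(k+1)}\}$); $W_I=(1-h)^{\lambda^{\{1\}}}\mathrm{Sym}_{t^{(1)}}\cdots\mathrm{Sym}_{t^{(N-1)}}U_I$ (sum over permutations within each group $t^{(k)}$); $W_{\sigma,I}(t,z,h)=W_{\sigma^{-1}(I)}(t,z_{\sigma(1)},\dots,z_{\sigma(n)},h)$.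 The identities are identities of functions of $t,z,h$. *)

theory Defs
  imports Complex_Main "HOL-Combinatorics.Transposition" "HOL-Combinatorics.Permutations"
begin

definition lsum :: "(nat \<Rightarrow> nat) \<Rightarrow> nat \<Rightarrow> nat" where
  "lsum lam k = (\<Sum>j=1..k. lam j)"

definition ordpart :: "nat \<Rightarrow> nat \<Rightarrow> (nat \<Rightarrow> nat) \<Rightarrow> (nat \<Rightarrow> nat set) set" where
  "ordpart N n lam = {I. (\<forall>k\<in>{1..N}. card (I k) = lam k)
      \<and> (\<forall>k. k \<notin> {1..N} \<longrightarrow> I k = {})
      \<and> (\<forall>j\<in>{1..N}. \<forall>k\<in>{1..N}. j \<noteq> k \<longrightarrow> I j \<inter> I k = {})
      \<and> (\<Union>k\<in>{1..N}. I k) = {1..n}}"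

definition pidx :: "(nat \<Rightarrow> nat set) \<Rightarrow> nat \<Rightarrow> nat \<Rightarrow> nat" where
  "pidx I k c = sorted_list_of_set (\<Union>j\<in>{1..k}. I j) ! (c - 1)"

text \<open>variables t^(k)_a, with t^(N)_a = z_a\<close>
definition tvar :: "nat \<Rightarrow> (nat \<Rightarrow> nat \<Rightarrow> 'a) \<Rightarrow> (nat \<Rightarrow> 'a) \<Rightarrow> nat \<Rightarrow> nat \<Rightarrow> 'a" where
  "tvar N t z k a = (if k = N then z a else t k a)"

definition Ufun :: "nat \<Rightarrow> (nat \<Rightarrow> nat) \<Rightarrow> (nat \<Rightarrow> nat set) \<Rightarrow> (nat \<Rightarrow> nat \<Rightarrow> 'a::field)
    \<Rightarrow> (nat \<Rightarrow> 'a) \<Rightarrow> 'a \<Rightarrow> 'a" where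
  "Ufun N lam I t z h =
     (\<Prod>k\<in>{1..N-1}. \<Prod>a\<in>{1..lsum lam k}.
        (\<Prod>c\<in>{c\<in>{1..lsum lam (k+1)}. pidx I (k+1) c < pidx I k a}.
            1 - h * tvar N t z (k+1) c / tvar N t z k a)
      * (\<Prod>c\<in>{c\<in>{1..lsum lam (k+1)}. pidx I (k+1) c > pidx I k a}.
            1 - tvar N t z (k+1) c / tvar N t z k a)
      * (\<Prod>b\<in>{a+1..lsum lam k}.
            (1 - h * tvar N t z k b / tvar N t z k a) / (1 - tvar N t z k b / tvar N t z k a)))"

definition symperms :: "nat \<Rightarrow> (nat \<Rightarrow> nat) \<Rightarrow> (nat \<Rightarrow> nat \<Rightarrow> nat) set" where
  "symperms N lam = {\<rho>. \<forall>k. (k \<in> {1..N-1} \<longrightarrow> \<rho> k permutes {1..lsum lam k})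
                         \<and> (k \<notin> {1..N-1} \<longrightarrow> \<rho> k = id)}"

definition Wfun :: "nat \<Rightarrow> (nat \<Rightarrow> nat) \<Rightarrow> (nat \<Rightarrow> nat set) \<Rightarrow> (nat \<Rightarrow> nat \<Rightarrow> 'a::field)
    \<Rightarrow> (nat \<Rightarrow> 'a) \<Rightarrow> 'a \<Rightarrow> 'a" where
  "Wfun N lam I t z h = (1 - h) ^ (\<Sum>k=1..N-1. lsum lam k)
     * (\<Sum>\<rho>\<in>symperms N lam. Ufun N lam I (\<lambda>k a. t k (\<rho> k a)) z h)"

definition Wsig :: "nat \<Rightarrow> (nat \<Rightarrow> nat) \<Rightarrow> (nat \<Rightarrow> nat) \<Rightarrow> (nat \<Rightarrow> nat set)
    \<Rightarrow> (nat \<Rightarrow> nat \<Rightarrow> 'a::field) \<Rightarrow> (nat \<Rightarrow> 'a) \<Rightarrow> 'a \<Rightarrow> 'a" where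
  "Wsig N lam \<sigma> I t z h = Wfun N lam (\<lambda>k. inv \<sigma> ` I k) t (\<lambda>a. z (\<sigma> a)) h"

end

theory Submission
  imports Defs
begin


definition ff :: "complex \<Rightarrow> complex \<Rightarrow> complex \<Rightarrow> complex \<Rightarrow> complex \<Rightarrow> complex" where
  "ff h X Y A B = (1 - B/X) * (1 - h*A/Y) * ((1 - h*Y/X)/(1 - Y/X))"

lemma ff_sym:
  assumes "X \<noteq> 0" "Y \<noteq> 0" "X \<noteq> Y"
  shows "ff h X Y A B + ff h Y X A B = ff h X Y B A + ff h Y X B A"
proof -
  have "X - Y \<noteq> 0" "Y - X \<noteq> 0" using assms by auto
  then show ?thesis using assms unfolding ff_def
    by (simp add: field_simps)
qed

lemma ff_poly:
  assumes "X \<noteq> 0" "Y \<noteq> 0" "X \<noteq> Y"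
  shows "ff h X Y A B = (X - B)*(Y - h*A)*(X - h*Y) / (X*Y*(X-Y))"
proof -
  have "X - Y \<noteq> 0" using assms by auto
  then show ?thesis using assms unfolding ff_def by (simp add: field_simps)
qed

lemma ff_prop_poly:
  fixes c1 c2 :: complex
  assumes H1: "(Y - h*X) * q2 = c1*(Y-X)*r1 + (1-h)*(c2*Y + (1-c2)*X)*q1"
    and H2: "(X - h*Y) * q1 = c1*(X-Y)*r2 + (1-h)*(c2*X + (1-c2)*Y)*q2"
  shows "(Y-X)*((B - h*A) * ((X - A)*(Y - h*B)*(X - h*Y) * q1 - (Y - A)*(X - h*B)*(Y - h*X) * q2))
       = (Y-X)*(c1*(B-A)*((X - B)*(Y - h*A)*(X - h*Y) * r1 - (Y - B)*(X - h*A)*(Y - h*X) * r2)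
         + (1-h)*(c2*B + (1-c2)*A)*((X - B)*(Y - h*A)*(X - h*Y) * q1 - (Y - B)*(X - h*A)*(Y - h*X) * q2))"
  using H1 H2 by algebra

lemma ff_poly':
  assumes "X \<noteq> 0" "Y \<noteq> 0" "X \<noteq> Y"
  shows "ff h Y X A B = - ((Y - B)*(X - h*A)*(Y - h*X) / (X*Y*(X-Y)))"
proof -
  have "X - Y \<noteq> 0" "Y - X \<noteq> 0" using assms by auto
  then show ?thesis using assms unfolding ff_def by (simp add: field_simps)
qed

lemma ff_prop:
  fixes c1 c2 :: complex
  assumes "X \<noteq> 0" "Y \<noteq> 0" "X \<noteq> Y"
    and H1: "(Y - h*X) * q2 = c1*(Y-X)*r1 + (1-h)*(c2*Y + (1-c2)*X)*q1"
    and H2: "(X - h*Y) * q1 = c1*(X-Y)*r2 + (1-h)*(c2*X + (1-c2)*Y)*q2"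
  shows "(B - h*A) * (ff h X Y B A * q1 + ff h Y X B A * q2)
       = c1*(B-A)*(ff h X Y A B * r1 + ff h Y X A B * r2)
         + (1-h)*(c2*B + (1-c2)*A)*(ff h X Y A B * q1 + ff h Y X A B * q2)"
proof -
  define d where "d = X*Y*(X-Y)"
  have d0: "d \<noteq> 0" using assms by (simp add: d_def)
  have yx: "Y - X \<noteq> 0" using assms by simp
  note P = ff_prop_poly[OF H1 H2, of B A]
  have L: "(B - h*A) * (ff h X Y B A * q1 + ff h Y X B A * q2)
     = ((B - h*A) * ((X - A)*(Y - h*B)*(X - h*Y) * q1 - (Y - A)*(X - h*B)*(Y - h*X) * q2)) / d"
    unfolding ff_poly[OF assms(1-3)] ff_poly'[OF assms(1-3)] d_def[symmetric]
    using d0 by (simp add: field_simps)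
  have R: "c1*(B-A)*(ff h X Y A B * r1 + ff h Y X A B * r2)
         + (1-h)*(c2*B + (1-c2)*A)*(ff h X Y A B * q1 + ff h Y X A B * q2)
     = (c1*(B-A)*((X - B)*(Y - h*A)*(X - h*Y) * r1 - (Y - B)*(X - h*A)*(Y - h*X) * r2)
         + (1-h)*(c2*B + (1-c2)*A)*((X - B)*(Y - h*A)*(X - h*Y) * q1 - (Y - B)*(X - h*A)*(Y - h*X) * q2)) / d"
    unfolding ff_poly[OF assms(1-3)] ff_poly'[OF assms(1-3)] d_def[symmetric]
    using d0 by (simp add: field_simps)
  show ?thesis unfolding L R using P yx by simp
qed




fun chain :: "complex \<Rightarrow> (complex \<Rightarrow> complex \<Rightarrow> complex) \<Rightarrow> (nat \<Rightarrow> complex) \<Rightarrow> (nat \<Rightarrow> complex)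
    \<Rightarrow> nat \<Rightarrow> nat \<Rightarrow> complex \<Rightarrow> complex \<Rightarrow> complex" where
  "chain h b X Y n0 0 A B = b A B"
| "chain h b X Y n0 (Suc j) A B =
     ff h (X (n0+j)) (Y (n0+j)) A B * chain h b X Y n0 j (X (n0+j)) (Y (n0+j))
   + ff h (Y (n0+j)) (X (n0+j)) A B * chain h b X Y n0 j (Y (n0+j)) (X (n0+j))"

lemma chain_cong:
  "(\<And>i. i < j \<Longrightarrow> X' (n0+i) = X (n0+i) \<and> Y' (n0+i) = Y (n0+i))
   \<Longrightarrow> chain h b X' Y' n0 j = chain h b X Y n0 j"
  by (induction j) (auto simp: fun_eq_iff)

lemma chain_swap: "chain h b Y X n0 j = chain h b X Y n0 j"
  by (induction j) (auto simp: fun_eq_iff)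

definition sw :: "nat set \<Rightarrow> (nat \<Rightarrow> complex) \<Rightarrow> (nat \<Rightarrow> complex) \<Rightarrow> nat \<Rightarrow> complex" where
  "sw E X Y m = (if m \<in> E then Y m else X m)"

lemma chain_sum:
  "(\<Sum>E\<in>Pow {n0..<n0+j}. b (sw E X Y n0) (sw E Y X n0) *
      (\<Prod>m\<in>{n0..<n0+j}. ff h (sw E X Y m) (sw E Y X m) (sw E X Y (Suc m)) (sw E Y X (Suc m))))
   = chain h b X Y n0 j (X (n0+j)) (Y (n0+j))"
proof (induction j arbitrary: X Y)
  case 0
  then show ?case by (simp add: sw_def)
next
  case (Suc j)
  define A where "A = {n0..<n0+j}"
  define x where "x = n0 + j"
  have xA: "x \<notin> A" "finite A" by (auto simp: A_def x_def)
  have ins: "{n0..<n0+Suc j} = insert x A" by (auto simp: A_def x_def)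
  define G where "G = (\<lambda>E. b (sw E X Y n0) (sw E Y X n0) *
      (\<Prod>m\<in>insert x A. ff h (sw E X Y m) (sw E Y X m) (sw E X Y (Suc m)) (sw E Y X (Suc m))))"
  have disj: "Pow A \<inter> insert x ` Pow A = {}" using xA by auto
  have inj: "inj_on (insert x) (Pow A)" using xA by (auto simp: inj_on_def)
  have S: "(\<Sum>E\<in>Pow (insert x A). G E) = (\<Sum>E\<in>Pow A. G E) + (\<Sum>E\<in>Pow A. G (insert x E))"
    unfolding Pow_insert using disj inj xA
    by (simp add: sum.union_disjoint sum.reindex)
  have G1: "G E = ff h (X x) (Y x) (X (Suc x)) (Y (Suc x)) *
     (b (sw E X Y n0) (sw E Y X n0) * (\<Prod>m\<in>A. ff h (sw E X Y m) (sw E Y X m) (sw E X Y (Suc m)) (sw E Y X (Suc m))))"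
    if "E \<in> Pow A" for E
  proof -
    have "x \<notin> E" "Suc x \<notin> E" using that xA by (auto simp: A_def x_def)
    then show ?thesis unfolding G_def using xA by (simp add: sw_def)
  qed
  define X' where "X' = X(x := Y x)"
  define Y' where "Y' = Y(x := X x)"
  have G2: "G (insert x E) = ff h (Y x) (X x) (X (Suc x)) (Y (Suc x)) *
     (b (sw E X' Y' n0) (sw E Y' X' n0) * (\<Prod>m\<in>A. ff h (sw E X' Y' m) (sw E Y' X' m) (sw E X' Y' (Suc m)) (sw E Y' X' (Suc m))))"
    if "E \<in> Pow A" for E
  proof -
    have nE: "x \<notin> E" "Suc x \<notin> E" using that xA by (auto simp: A_def x_def)
    have e1: "sw (insert x E) X Y m = sw E X' Y' m" "sw (insert x E) Y X m = sw E Y' X' m" if "m \<le> x" for m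
      using nE that by (auto simp: sw_def X'_def Y'_def)
    have p: "(\<Prod>m\<in>A. ff h (sw (insert x E) X Y m) (sw (insert x E) Y X m) (sw (insert x E) X Y (Suc m)) (sw (insert x E) Y X (Suc m)))
      = (\<Prod>m\<in>A. ff h (sw E X' Y' m) (sw E Y' X' m) (sw E X' Y' (Suc m)) (sw E Y' X' (Suc m)))"
    proof (rule prod.cong)
      fix m assume "m \<in> A"
      then have "m \<le> x" "Suc m \<le> x" by (auto simp: A_def x_def)
      then show "ff h (sw (insert x E) X Y m) (sw (insert x E) Y X m) (sw (insert x E) X Y (Suc m)) (sw (insert x E) Y X (Suc m))
        = ff h (sw E X' Y' m) (sw E Y' X' m) (sw E X' Y' (Suc m)) (sw E Y' X' (Suc m))"
        by (simp only: e1)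
    qed simp
    have "n0 \<le> x" by (simp add: x_def)
    then show ?thesis unfolding G_def using xA nE p e1[of n0]
      by (simp add: sw_def)
  qed
  have IH1: "(\<Sum>E\<in>Pow A. b (sw E X Y n0) (sw E Y X n0) * (\<Prod>m\<in>A. ff h (sw E X Y m) (sw E Y X m) (sw E X Y (Suc m)) (sw E Y X (Suc m))))
     = chain h b X Y n0 j (X x) (Y x)"
    using Suc.IH[of X Y] by (simp add: A_def x_def)
  have IH2: "(\<Sum>E\<in>Pow A. b (sw E X' Y' n0) (sw E Y' X' n0) * (\<Prod>m\<in>A. ff h (sw E X' Y' m) (sw E Y' X' m) (sw E X' Y' (Suc m)) (sw E Y' X' (Suc m))))
     = chain h b X Y n0 j (Y x) (X x)"
  proof -
    have "chain h b X' Y' n0 j = chain h b X Y n0 j"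
      by (rule chain_cong) (auto simp: X'_def Y'_def x_def)
    moreover have "X' x = Y x" "Y' x = X x" by (simp_all add: X'_def Y'_def)
    moreover have "(\<Sum>E\<in>Pow A. b (sw E X' Y' n0) (sw E Y' X' n0) * (\<Prod>m\<in>A. ff h (sw E X' Y' m) (sw E Y' X' m) (sw E X' Y' (Suc m)) (sw E Y' X' (Suc m))))
     = chain h b X' Y' n0 j (X' x) (Y' x)"
      using Suc.IH[of X' Y'] by (simp add: A_def x_def)
    ultimately show ?thesis by simp
  qed
  have "(\<Sum>E\<in>Pow (insert x A). G E) = chain h b X Y n0 (Suc j) (X (Suc x)) (Y (Suc x))"
  proof -
    have "(\<Sum>E\<in>Pow A. G E) = ff h (X x) (Y x) (X (Suc x)) (Y (Suc x)) * chain h b X Y n0 j (X x) (Y x)"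
      using sum.cong[OF refl G1, of "Pow A"] by (simp add: sum_distrib_left[symmetric] IH1)
    moreover have "(\<Sum>E\<in>Pow A. G (insert x E)) = ff h (Y x) (X x) (X (Suc x)) (Y (Suc x)) * chain h b X Y n0 j (Y x) (X x)"
      using sum.cong[OF refl G2, of "Pow A"] by (simp add: sum_distrib_left[symmetric] IH2)
    ultimately show ?thesis unfolding S by (simp add: x_def)
  qed
  then show ?case unfolding G_def ins by (simp only: x_def add_Suc_right)
qed

lemma chain_sym:
  assumes "\<And>A B. b A B = b B A"
    and "\<And>i. i < j \<Longrightarrow> X (n0+i) \<noteq> 0 \<and> Y (n0+i) \<noteq> 0 \<and> X (n0+i) \<noteq> Y (n0+i)"
  shows "chain h b X Y n0 j A B = chain h b X Y n0 j B A"
  using assms(2)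
proof (induction j arbitrary: A B)
  case 0
  then show ?case using assms(1) by simp
next
  case (Suc j)
  have IH: "chain h b X Y n0 j (Y (n0+j)) (X (n0+j)) = chain h b X Y n0 j (X (n0+j)) (Y (n0+j))"
    using Suc by auto
  have nd: "X (n0+j) \<noteq> 0" "Y (n0+j) \<noteq> 0" "X (n0+j) \<noteq> Y (n0+j)" using Suc.prems[of j] by auto
  show ?case using ff_sym[OF nd, of h A B]
    by (simp add: IH) (metis distrib_right)
qed

lemma chain_rel:
  fixes c1 c2 :: complex
  assumes "\<And>A B. (B - h*A) * bS B A = c1*(B-A)*b A B + (1-h)*(c2*B+(1-c2)*A)*bS A B"
    and "\<And>i. i < j \<Longrightarrow> X (n0+i) \<noteq> 0 \<and> Y (n0+i) \<noteq> 0 \<and> X (n0+i) \<noteq> Y (n0+i)"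
  shows "(B - h*A) * chain h bS X Y n0 j B A = c1*(B-A)*chain h b X Y n0 j A B
           + (1-h)*(c2*B+(1-c2)*A)*chain h bS X Y n0 j A B"
  using assms(2)
proof (induction j arbitrary: A B)
  case 0
  then show ?case using assms(1) by simp
next
  case (Suc j)
  have nd: "X (n0+j) \<noteq> 0" "Y (n0+j) \<noteq> 0" "X (n0+j) \<noteq> Y (n0+j)" using Suc.prems[of j] by auto
  have H: "(B - h*A) * chain h bS X Y n0 j B A = c1*(B-A)*chain h b X Y n0 j A B
           + (1-h)*(c2*B+(1-c2)*A)*chain h bS X Y n0 j A B" for A B
    using Suc by auto
  show ?case unfolding chain.simps
    using ff_prop[OF nd H[where A="X (n0+j)" and B="Y (n0+j)"] H[where A="Y (n0+j)" and B="X (n0+j)"], of B A]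
    by simp
qed




definition PP :: "(nat \<Rightarrow> nat set) \<Rightarrow> nat \<Rightarrow> nat set" where
  "PP J m = (\<Union>j\<in>{1..m}. J j)"

lemma pidx_PP: "pidx J m c = sorted_list_of_set (PP J m) ! (c - 1)"
  by (simp add: pidx_def PP_def)

lemma strict_sorted_nth_less_iff:
  assumes "sorted_wrt (<) (xs :: nat list)" "i < length xs" "j < length xs"
  shows "xs ! i < xs ! j \<longleftrightarrow> i < j"
proof
  assume "i < j" then show "xs ! i < xs ! j" using assms by (simp add: sorted_wrt_iff_nth_less)
next
  assume *: "xs ! i < xs ! j"
  show "i < j"
  proof (rule ccontr)
    assume "\<not> i < j"
    then have "j < i \<or> j = i" by auto
    then show False
    proof
      assume "j < i" then have "xs ! j < xs ! i" using assms by (simp add: sorted_wrt_iff_nth_less)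
      then show False using * by simp
    qed (use * in simp)
  qed
qed

lemma sl_bij:
  assumes "finite (A :: nat set)"
  shows "bij_betw (\<lambda>c. sorted_list_of_set A ! (c - 1)) {1..card A} A"
proof -
  let ?xs = "sorted_list_of_set A"
  have len: "length ?xs = card A" by simp
  have st: "sorted_wrt (<) ?xs" using assms by simp
  have d: "distinct ?xs" using assms by simp
  show ?thesis
  proof (rule bij_betwI')
    fix x y assume "x \<in> {1..card A}" "y \<in> {1..card A}"
    then show "(?xs ! (x - 1) = ?xs ! (y - 1)) = (x = y)"
      using d len by (auto simp: nth_eq_iff_index_eq)
  next
    fix x assume "x \<in> {1..card A}"
    then have "x - 1 < length ?xs" using len by auto
    then have "?xs ! (x - 1) \<in> set ?xs" by simp
    then show "?xs ! (x - 1) \<in> A" using assms by simp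
  next
    fix y assume "y \<in> A"
    then have "y \<in> set ?xs" using assms by simp
    then obtain i where "i < length ?xs" "?xs ! i = y" by (metis in_set_conv_nth)
    then show "\<exists>x\<in>{1..card A}. y = ?xs ! (x - 1)"
      using len by (intro bexI[of _ "Suc i"]) auto
  qed
qed

lemma sl_less_iff:
  assumes "finite (A :: nat set)" "c \<in> {1..card A}" "d \<in> {1..card A}"
  shows "sorted_list_of_set A ! (c - 1) < sorted_list_of_set A ! (d - 1) \<longleftrightarrow> c < d"
proof -
  have "sorted_wrt (<) (sorted_list_of_set A)" using assms by simp
  moreover have "c - 1 < length (sorted_list_of_set A)" "d - 1 < length (sorted_list_of_set A)"
    using assms by auto
  ultimately have "sorted_list_of_set A ! (c - 1) < sorted_list_of_set A ! (d - 1) \<longleftrightarrow> c - 1 < d - 1"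
    by (rule strict_sorted_nth_less_iff)
  moreover have "c - 1 < d - 1 \<longleftrightarrow> c < d" using assms by auto
  ultimately show ?thesis by simp
qed

definition cc :: "complex \<Rightarrow> nat \<Rightarrow> nat \<times> nat \<Rightarrow> nat \<times> nat \<Rightarrow> complex \<Rightarrow> complex \<Rightarrow> complex" where
  "cc h N v w X Y =
    (if fst v < N \<and> fst w = Suc (fst v) then
       (if snd w < snd v then 1 - h*Y/X else if snd v < snd w then 1 - Y/X else 1)
     else if fst v < N \<and> fst w = fst v \<and> snd v < snd w then (1 - h*Y/X)/(1 - Y/X) else 1)"

definition VV :: "nat \<Rightarrow> (nat \<Rightarrow> nat set) \<Rightarrow> (nat \<times> nat) set" where
  "VV N J = Sigma {1..N} (PP J)"

definition NP :: "complex \<Rightarrow> nat \<Rightarrow> (nat \<times> nat) set \<Rightarrow> (nat \<times> nat \<Rightarrow> complex) \<Rightarrow> complex" where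
  "NP h N V y = (\<Prod>v\<in>V. \<Prod>w\<in>V. cc h N v w (y v) (y w))"

definition idx :: "(nat \<Rightarrow> nat set) \<Rightarrow> nat \<Rightarrow> nat \<Rightarrow> nat" where
  "idx J m p = inv_into {1..card (PP J m)} (\<lambda>c. sorted_list_of_set (PP J m) ! (c - 1)) p"

lemma prod_Sigma':
  "finite A \<Longrightarrow> (\<And>x. x \<in> A \<Longrightarrow> finite (B x)) \<Longrightarrow>
   (\<Prod>v\<in>Sigma A B. G v) = (\<Prod>x\<in>A. \<Prod>y\<in>B x. G (x,y))"
  by (simp add: prod.Sigma split_def)

lemma prod_if2:
  assumes "finite A" "\<And>x. \<not> (P x \<and> Q x)"
  shows "(\<Prod>x\<in>A. if P x then f x else if Q x then g x else 1)
       = (\<Prod>x\<in>{x\<in>A. P x}. f x) * (\<Prod>x\<in>{x\<in>A. Q x}. g x)"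
proof -
  have "(\<Prod>x\<in>A. if P x then f x else if Q x then g x else 1)
      = (\<Prod>x\<in>A. (if P x then f x else 1) * (if Q x then g x else 1))"
    using assms(2) by (intro prod.cong) auto
  also have "\<dots> = (\<Prod>x\<in>A. if P x then f x else 1) * (\<Prod>x\<in>A. if Q x then g x else 1)"
    by (rule prod.distrib)
  also have "\<dots> = (\<Prod>x\<in>{x\<in>A. P x}. f x) * (\<Prod>x\<in>{x\<in>A. Q x}. g x)"
    using assms(1) by (simp add: prod.inter_filter)
  finally show ?thesis .
qed

lemma pidx_bij:
  assumes "finite (PP J m)"
  shows "bij_betw (pidx J m) {1..card (PP J m)} (PP J m)"
  unfolding pidx_PP[abs_def] using sl_bij[OF assms] by simp

lemma idx_alt: "idx J m = inv_into {1..card (PP J m)} (pidx J m)"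
  unfolding idx_def pidx_PP[abs_def] by simp

lemma idx_pidx:
  assumes "finite (PP J m)" "c \<in> {1..card (PP J m)}"
  shows "idx J m (pidx J m c) = c"
  unfolding idx_alt using bij_betw_inv_into_left[OF pidx_bij[OF assms(1)] assms(2)] .

lemma pidx_idx:
  assumes "finite (PP J m)" "p \<in> PP J m"
  shows "pidx J m (idx J m p) = p" "idx J m p \<in> {1..card (PP J m)}"
  unfolding idx_alt using bij_betw_inv_into_right[OF pidx_bij[OF assms(1)] assms(2)] apply simp
  using bij_betwE[OF bij_betw_inv_into[OF pidx_bij[OF assms(1)]]] assms(2) by blast

lemma idx_bij:
  assumes "finite (PP J m)"
  shows "bij_betw (idx J m) (PP J m) {1..card (PP J m)}"
  unfolding idx_alt using bij_betw_inv_into[OF pidx_bij[OF assms(1)]] .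

lemma pidx_less_iff:
  assumes "finite (PP J m)" "c \<in> {1..card (PP J m)}" "d \<in> {1..card (PP J m)}"
  shows "pidx J m c < pidx J m d \<longleftrightarrow> c < d"
  unfolding pidx_PP using sl_less_iff[OF assms] .

lemma NP_levels:
  assumes fin: "\<And>m. finite (PP J m)"
  shows "NP h N (VV N J) y = (\<Prod>m\<in>{1..N-1}. \<Prod>p\<in>PP J m.
       (\<Prod>q\<in>PP J (Suc m). cc h N (m,p) (Suc m,q) (y (m,p)) (y (Suc m,q)))
     * (\<Prod>q\<in>PP J m. cc h N (m,p) (m,q) (y (m,p)) (y (m,q))))" (is "_ = ?R")
proof -
  define K where "K m p = (\<Prod>w\<in>VV N J. cc h N (m,p) w (y (m,p)) (y w))" for m p
  have NPK: "NP h N (VV N J) y = (\<Prod>m\<in>{1..N}. \<Prod>p\<in>PP J m. K m p)"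
    unfolding NP_def K_def VV_def using fin by (simp add: prod_Sigma')
  have KS: "K m p = (\<Prod>m'\<in>{1..N}. \<Prod>q\<in>PP J m'. cc h N (m,p) (m',q) (y (m,p)) (y (m',q)))" for m p
    unfolding K_def VV_def using fin by (simp add: prod_Sigma')
  have KN: "K N p = 1" for p unfolding KS cc_def by simp
  have Km: "K m p = (\<Prod>q\<in>PP J (Suc m). cc h N (m,p) (Suc m,q) (y (m,p)) (y (Suc m,q)))
     * (\<Prod>q\<in>PP J m. cc h N (m,p) (m,q) (y (m,p)) (y (m,q)))" if m: "m \<in> {1..N-1}" for m p
  proof -
    have "K m p = (\<Prod>m'\<in>{m, Suc m}. \<Prod>q\<in>PP J m'. cc h N (m,p) (m',q) (y (m,p)) (y (m',q)))"
      unfolding KS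
    proof (rule prod.mono_neutral_right)
      show "{m, Suc m} \<subseteq> {1..N}" using m by auto
      show "\<forall>i\<in>{1..N} - {m, Suc m}. (\<Prod>q\<in>PP J i. cc h N (m,p) (i,q) (y (m,p)) (y (i,q))) = 1"
        by (auto simp: cc_def)
    qed simp
    also have "\<dots> = (\<Prod>q\<in>PP J (Suc m). cc h N (m,p) (Suc m,q) (y (m,p)) (y (Suc m,q)))
     * (\<Prod>q\<in>PP J m. cc h N (m,p) (m,q) (y (m,p)) (y (m,q)))" by (simp add: mult.commute)
    finally show ?thesis .
  qed
  show ?thesis
  proof (cases "N = 0")
    case True then show ?thesis unfolding NPK by simp
  next
    case False
    then have e: "{1..N} = insert N {1..N-1}" by auto
    have "NP h N (VV N J) y = (\<Prod>m\<in>{1..N-1}. \<Prod>p\<in>PP J m. K m p)"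
      unfolding NPK e using KN by (subst prod.insert) auto
    also have "\<dots> = ?R" by (intro prod.cong refl) (simp add: Km)
    finally show ?thesis .
  qed
qed

lemma U_node:
  assumes fin: "\<And>m. finite (PP J m)"
    and card: "\<And>m. m \<in> {1..N} \<Longrightarrow> card (PP J m) = lsum lam m"
  shows "Ufun N lam J t' z h = NP h N (VV N J) (\<lambda>(m,p). tvar N t' z m (idx J m p))"
proof -
  define y where "y = (\<lambda>(m,p). tvar N t' z m (idx J m p))"
  define tv where "tv = tvar N t' z"
  have ypidx: "y (m, pidx J m c) = tv m c" if "m \<in> {1..N}" "c \<in> {1..lsum lam m}" for m c
    using idx_pidx[OF fin, where c=c and m=m] that card[OF that(1)] by (simp add: y_def tv_def)
  have lev: "(\<Prod>a\<in>{1..lsum lam m}.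
        (\<Prod>c\<in>{c\<in>{1..lsum lam (m+1)}. pidx J (m+1) c < pidx J m a}. 1 - h * tv (m+1) c / tv m a)
      * (\<Prod>c\<in>{c\<in>{1..lsum lam (m+1)}. pidx J (m+1) c > pidx J m a}. 1 - tv (m+1) c / tv m a)
      * (\<Prod>b\<in>{a+1..lsum lam m}. (1 - h * tv m b / tv m a) / (1 - tv m b / tv m a)))
    = (\<Prod>p\<in>PP J m.
       (\<Prod>q\<in>PP J (Suc m). cc h N (m,p) (Suc m,q) (y (m,p)) (y (Suc m,q)))
     * (\<Prod>q\<in>PP J m. cc h N (m,p) (m,q) (y (m,p)) (y (m,q))))"
    if m: "m \<in> {1..N-1}" for m
  proof -
    have m1: "m \<in> {1..N}" "Suc m \<in> {1..N}" using m by auto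
    have cm: "card (PP J m) = lsum lam m" and cm': "card (PP J (Suc m)) = lsum lam (Suc m)"
      using card m1 by auto
    have bm: "bij_betw (pidx J m) {1..lsum lam m} (PP J m)"
      using pidx_bij[OF fin, where m=m] cm by simp
    have bm': "bij_betw (pidx J (Suc m)) {1..lsum lam (Suc m)} (PP J (Suc m))"
      using pidx_bij[OF fin, where m="Suc m"] cm' by simp
    have RHS: "(\<Prod>p\<in>PP J m.
       (\<Prod>q\<in>PP J (Suc m). cc h N (m,p) (Suc m,q) (y (m,p)) (y (Suc m,q)))
     * (\<Prod>q\<in>PP J m. cc h N (m,p) (m,q) (y (m,p)) (y (m,q))))
      = (\<Prod>a\<in>{1..lsum lam m}.
       (\<Prod>c\<in>{1..lsum lam (Suc m)}. cc h N (m,pidx J m a) (Suc m,pidx J (Suc m) c) (tv m a) (tv (Suc m) c))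
     * (\<Prod>b\<in>{1..lsum lam m}. cc h N (m,pidx J m a) (m,pidx J m b) (tv m a) (tv m b)))"
    proof -
      have "(\<Prod>p\<in>PP J m.
       (\<Prod>q\<in>PP J (Suc m). cc h N (m,p) (Suc m,q) (y (m,p)) (y (Suc m,q)))
     * (\<Prod>q\<in>PP J m. cc h N (m,p) (m,q) (y (m,p)) (y (m,q))))
       = (\<Prod>a\<in>{1..lsum lam m}.
       (\<Prod>q\<in>PP J (Suc m). cc h N (m,pidx J m a) (Suc m,q) (y (m,pidx J m a)) (y (Suc m,q)))
     * (\<Prod>q\<in>PP J m. cc h N (m,pidx J m a) (m,q) (y (m,pidx J m a)) (y (m,q))))"
        by (rule prod.reindex_bij_betw[OF bm, symmetric])
      also have "\<dots> = (\<Prod>a\<in>{1..lsum lam m}.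
       (\<Prod>c\<in>{1..lsum lam (Suc m)}. cc h N (m,pidx J m a) (Suc m,pidx J (Suc m) c) (tv m a) (tv (Suc m) c))
     * (\<Prod>b\<in>{1..lsum lam m}. cc h N (m,pidx J m a) (m,pidx J m b) (tv m a) (tv m b)))"
      proof (rule prod.cong[OF refl])
        fix a assume a: "a \<in> {1..lsum lam m}"
        have e1: "(\<Prod>q\<in>PP J (Suc m). cc h N (m,pidx J m a) (Suc m,q) (y (m,pidx J m a)) (y (Suc m,q)))
          = (\<Prod>c\<in>{1..lsum lam (Suc m)}. cc h N (m,pidx J m a) (Suc m,pidx J (Suc m) c) (tv m a) (tv (Suc m) c))"
          by (rule trans[OF prod.reindex_bij_betw[OF bm', symmetric]], rule prod.cong[OF refl])
             (simp add: ypidx[OF m1(1) a] ypidx[OF m1(2)])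
        have e2: "(\<Prod>q\<in>PP J m. cc h N (m,pidx J m a) (m,q) (y (m,pidx J m a)) (y (m,q)))
          = (\<Prod>b\<in>{1..lsum lam m}. cc h N (m,pidx J m a) (m,pidx J m b) (tv m a) (tv m b))"
          by (rule trans[OF prod.reindex_bij_betw[OF bm, symmetric]], rule prod.cong[OF refl])
             (simp add: ypidx[OF m1(1) a] ypidx[OF m1(1)])
        show "(\<Prod>q\<in>PP J (Suc m). cc h N (m,pidx J m a) (Suc m,q) (y (m,pidx J m a)) (y (Suc m,q)))
     * (\<Prod>q\<in>PP J m. cc h N (m,pidx J m a) (m,q) (y (m,pidx J m a)) (y (m,q)))
          = (\<Prod>c\<in>{1..lsum lam (Suc m)}. cc h N (m,pidx J m a) (Suc m,pidx J (Suc m) c) (tv m a) (tv (Suc m) c))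
     * (\<Prod>b\<in>{1..lsum lam m}. cc h N (m,pidx J m a) (m,pidx J m b) (tv m a) (tv m b))"
          by (simp only: e1 e2)
      qed
      finally show ?thesis .
    qed
    show ?thesis unfolding RHS
    proof (rule prod.cong[OF refl])
      fix a assume a: "a \<in> {1..lsum lam m}"
      have mN: "m < N" using m by auto
      have A: "(\<Prod>c\<in>{1..lsum lam (Suc m)}. cc h N (m,pidx J m a) (Suc m,pidx J (Suc m) c) (tv m a) (tv (Suc m) c))
        = (\<Prod>c\<in>{c\<in>{1..lsum lam (m+1)}. pidx J (m+1) c < pidx J m a}. 1 - h * tv (m+1) c / tv m a)
        * (\<Prod>c\<in>{c\<in>{1..lsum lam (m+1)}. pidx J (m+1) c > pidx J m a}. 1 - tv (m+1) c / tv m a)"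
        unfolding cc_def using mN by (simp add: prod_if2)
      have B: "(\<Prod>b\<in>{1..lsum lam m}. cc h N (m,pidx J m a) (m,pidx J m b) (tv m a) (tv m b))
        = (\<Prod>b\<in>{a+1..lsum lam m}. (1 - h * tv m b / tv m a) / (1 - tv m b / tv m a))"
      proof -
        have "(\<Prod>b\<in>{1..lsum lam m}. cc h N (m,pidx J m a) (m,pidx J m b) (tv m a) (tv m b))
          = (\<Prod>b\<in>{1..lsum lam m}. if a < b then (1 - h * tv m b / tv m a) / (1 - tv m b / tv m a) else 1)"
        proof (rule prod.cong[OF refl])
          fix b assume b: "b \<in> {1..lsum lam m}"
          have "pidx J m a < pidx J m b \<longleftrightarrow> a < b"
            using pidx_less_iff[OF fin, where c=a and d=b and m=m] a b cm by simp
          then show "cc h N (m,pidx J m a) (m,pidx J m b) (tv m a) (tv m b)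
            = (if a < b then (1 - h * tv m b / tv m a) / (1 - tv m b / tv m a) else 1)"
            unfolding cc_def using mN by simp
        qed
        also have "\<dots> = (\<Prod>b\<in>{b\<in>{1..lsum lam m}. a < b}. (1 - h * tv m b / tv m a) / (1 - tv m b / tv m a))"
          by (rule prod.inter_filter[symmetric]) simp
        also have "{b\<in>{1..lsum lam m}. a < b} = {a+1..lsum lam m}" using a by auto
        finally show ?thesis .
      qed
      show "(\<Prod>c\<in>{c\<in>{1..lsum lam (m+1)}. pidx J (m+1) c < pidx J m a}. 1 - h * tv (m+1) c / tv m a)
      * (\<Prod>c\<in>{c\<in>{1..lsum lam (m+1)}. pidx J (m+1) c > pidx J m a}. 1 - tv (m+1) c / tv m a)
      * (\<Prod>b\<in>{a+1..lsum lam m}. (1 - h * tv m b / tv m a) / (1 - tv m b / tv m a))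
       = (\<Prod>c\<in>{1..lsum lam (Suc m)}. cc h N (m,pidx J m a) (Suc m,pidx J (Suc m) c) (tv m a) (tv (Suc m) c))
     * (\<Prod>b\<in>{1..lsum lam m}. cc h N (m,pidx J m a) (m,pidx J m b) (tv m a) (tv m b))"
        unfolding A B ..
    qed
  qed
  have "Ufun N lam J t' z h = (\<Prod>m\<in>{1..N-1}. \<Prod>p\<in>PP J m.
       (\<Prod>q\<in>PP J (Suc m). cc h N (m,p) (Suc m,q) (y (m,p)) (y (Suc m,q)))
     * (\<Prod>q\<in>PP J m. cc h N (m,p) (m,q) (y (m,p)) (y (m,q))))"
    unfolding Ufun_def tv_def[symmetric] by (rule prod.cong[OF refl]) (rule lev)
  also have "\<dots> = NP h N (VV N J) y" by (rule NP_levels[OF fin, symmetric])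
  finally show ?thesis by (simp add: y_def)
qed




definition Yv :: "nat \<Rightarrow> (nat \<Rightarrow> nat set) \<Rightarrow> (nat \<Rightarrow> nat \<Rightarrow> complex) \<Rightarrow> (nat \<Rightarrow> complex)
   \<Rightarrow> (nat \<Rightarrow> nat \<Rightarrow> nat) \<Rightarrow> nat \<times> nat \<Rightarrow> complex" where
  "Yv N J t u \<rho> = (\<lambda>(m,p). tvar N (\<lambda>k a. t k (\<rho> k a)) u m (idx J m p))"

lemma W_sum:
  assumes fin: "\<And>m. finite (PP J m)"
    and card: "\<And>m. m \<in> {1..N} \<Longrightarrow> card (PP J m) = lsum lam m"
  shows "Wfun N lam J t u h = (1 - h) ^ (\<Sum>k=1..N-1. lsum lam k)
     * (\<Sum>\<rho>\<in>symperms N lam. NP h N (VV N J) (Yv N J t u \<rho>))"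
  unfolding Wfun_def Yv_def using U_node[OF fin card] by simp

definition Mre :: "nat \<Rightarrow> (nat \<Rightarrow> nat \<Rightarrow> nat) \<Rightarrow> (nat \<Rightarrow> nat \<Rightarrow> nat) \<Rightarrow> nat \<Rightarrow> nat \<Rightarrow> nat" where
  "Mre N \<tau> \<rho> = (\<lambda>m. if m \<in> {1..N-1} then \<rho> m \<circ> \<tau> m else id)"

lemma symperms_reindex:
  assumes tau: "\<And>m. m \<in> {1..N-1} \<Longrightarrow> \<tau> m permutes {1..lsum lam m}"
  shows "(\<Sum>\<rho>\<in>symperms N lam. g \<rho>) = (\<Sum>\<rho>\<in>symperms N lam. g (Mre N \<tau> \<rho>))"
proof -
  define \<tau>' where "\<tau>' m = inv (\<tau> m)" for m
  have tau': "\<tau>' m permutes {1..lsum lam m}" if "m \<in> {1..N-1}" for m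
    using permutes_inv[OF tau[OF that]] by (simp add: \<tau>'_def)
  have bij: "bij_betw (Mre N \<tau>) (symperms N lam) (symperms N lam)"
  proof (rule bij_betw_byWitness[where f' = "Mre N \<tau>'"])
    show "\<forall>\<rho>\<in>symperms N lam. Mre N \<tau>' (Mre N \<tau> \<rho>) = \<rho>"
    proof
      fix \<rho> assume r: "\<rho> \<in> symperms N lam"
      show "Mre N \<tau>' (Mre N \<tau> \<rho>) = \<rho>"
      proof
        fix m
        show "Mre N \<tau>' (Mre N \<tau> \<rho>) m = \<rho> m"
        proof (cases "m \<in> {1..N-1}")
          case True
          have "\<rho> m \<circ> \<tau> m \<circ> \<tau>' m = \<rho> m"
            using permutes_inv_o(1)[OF tau[OF True]] by (simp add: \<tau>'_def o_assoc[symmetric])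
          then show ?thesis using True by (simp add: Mre_def)
        next
          case False
          then show ?thesis using r by (auto simp: Mre_def symperms_def)
        qed
      qed
    qed
    show "\<forall>\<rho>\<in>symperms N lam. Mre N \<tau> (Mre N \<tau>' \<rho>) = \<rho>"
    proof
      fix \<rho> assume r: "\<rho> \<in> symperms N lam"
      show "Mre N \<tau> (Mre N \<tau>' \<rho>) = \<rho>"
      proof
        fix m
        show "Mre N \<tau> (Mre N \<tau>' \<rho>) m = \<rho> m"
        proof (cases "m \<in> {1..N-1}")
          case True
          have "\<rho> m \<circ> \<tau>' m \<circ> \<tau> m = \<rho> m"
            using permutes_inv_o(2)[OF tau[OF True]] by (simp add: \<tau>'_def o_assoc[symmetric])
          then show ?thesis using True by (simp add: Mre_def)
        next
          case False
          then show ?thesis using r by (auto simp: Mre_def symperms_def)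
        qed
      qed
    qed
    show "Mre N \<tau> ` symperms N lam \<subseteq> symperms N lam"
      using tau by (auto simp: Mre_def symperms_def intro!: permutes_compose)
    show "Mre N \<tau>' ` symperms N lam \<subseteq> symperms N lam"
      using tau' by (auto simp: Mre_def symperms_def intro!: permutes_compose)
  qed
  show ?thesis using sum.reindex_bij_betw[OF bij, of g] by simp
qed

lemma NP_reindex:
  assumes "inj_on S V"
  shows "NP h N (S ` V) y = (\<Prod>v\<in>V. \<Prod>w\<in>V. cc h N (S v) (S w) (y (S v)) (y (S w)))"
proof -
  have "NP h N (S ` V) y = (\<Prod>v\<in>V. \<Prod>w\<in>S ` V. cc h N (S v) w (y (S v)) (y w))"
    unfolding NP_def by (rule prod.reindex[OF assms, unfolded comp_def])
  also have "\<dots> = (\<Prod>v\<in>V. \<Prod>w\<in>V. cc h N (S v) (S w) (y (S v)) (y (S w)))"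
    by (rule prod.cong[OF refl]) (rule prod.reindex[OF assms, unfolded comp_def])
  finally show ?thesis .
qed

definition Lset :: "(nat \<times> nat) set \<Rightarrow> nat \<Rightarrow> (nat \<times> nat) set" where
  "Lset V a = {v\<in>V. snd v \<in> {a, Suc a}}"

definition Rest :: "complex \<Rightarrow> nat \<Rightarrow> (nat \<times> nat) set \<Rightarrow> nat \<Rightarrow> (nat \<times> nat \<Rightarrow> complex) \<Rightarrow> complex" where
  "Rest h N V a y = (\<Prod>x\<in>V \<times> V - Lset V a \<times> Lset V a. cc h N (fst x) (snd x) (y (fst x)) (y (snd x)))"

definition Loc :: "complex \<Rightarrow> nat \<Rightarrow> (nat \<times> nat) set \<Rightarrow> nat \<Rightarrow> (nat \<times> nat \<Rightarrow> complex) \<Rightarrow> complex" where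
  "Loc h N V a y = (\<Prod>v\<in>Lset V a. \<Prod>w\<in>Lset V a. cc h N v w (y v) (y w))"

definition Sn :: "nat \<Rightarrow> nat \<times> nat \<Rightarrow> nat \<times> nat" where
  "Sn a v = (fst v, transpose a (Suc a) (snd v))"

definition NPS :: "complex \<Rightarrow> nat \<Rightarrow> (nat \<times> nat) set \<Rightarrow> nat \<Rightarrow> (nat \<times> nat \<Rightarrow> complex) \<Rightarrow> complex" where
  "NPS h N V a y = (\<Prod>v\<in>V. \<Prod>w\<in>V. cc h N (Sn a v) (Sn a w) (y v) (y w))"

definition LocS :: "complex \<Rightarrow> nat \<Rightarrow> (nat \<times> nat) set \<Rightarrow> nat \<Rightarrow> (nat \<times> nat \<Rightarrow> complex) \<Rightarrow> complex" where
  "LocS h N V a y = (\<Prod>v\<in>Lset V a. \<Prod>w\<in>Lset V a. cc h N (Sn a v) (Sn a w) (y v) (y w))"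

definition TE :: "nat set \<Rightarrow> nat \<Rightarrow> nat \<times> nat \<Rightarrow> nat \<times> nat" where
  "TE E a v = (fst v, if fst v \<in> E then transpose a (Suc a) (snd v) else snd v)"

lemma prod_pairs_split:
  assumes "finite V" "L \<subseteq> V"
  shows "(\<Prod>v\<in>V. \<Prod>w\<in>V. F v w) = (\<Prod>v\<in>L. \<Prod>w\<in>L. F v w) * (\<Prod>x\<in>V \<times> V - L \<times> L. F (fst x) (snd x))"
proof -
  have fL: "finite L" using assms finite_subset by blast
  have "(\<Prod>v\<in>V. \<Prod>w\<in>V. F v w) = (\<Prod>x\<in>V \<times> V. F (fst x) (snd x))"
    by (simp add: prod.cartesian_product split_def)
  also have "\<dots> = (\<Prod>x\<in>V \<times> V - L \<times> L. F (fst x) (snd x)) * (\<Prod>x\<in>L \<times> L. F (fst x) (snd x))"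
    by (rule prod.subset_diff) (use assms in auto)
  also have "(\<Prod>x\<in>L \<times> L. F (fst x) (snd x)) = (\<Prod>v\<in>L. \<Prod>w\<in>L. F v w)"
    by (simp add: prod.cartesian_product split_def)
  finally show ?thesis by (simp add: mult.commute)
qed

lemma transpose_pos:
  "p \<notin> {a, Suc a} \<Longrightarrow> transpose a (Suc a) p = p"
  "p \<in> {a, Suc a} \<Longrightarrow> transpose a (Suc a) p \<in> {a, Suc a}"
  by (auto simp: transpose_def)

lemma cc_T:
  assumes "fst v' = fst v" "fst w' = fst w"
    and "snd v \<notin> {a, Suc a} \<Longrightarrow> snd v' = snd v" "snd v \<in> {a, Suc a} \<Longrightarrow> snd v' \<in> {a, Suc a}"
    and "snd w \<notin> {a, Suc a} \<Longrightarrow> snd w' = snd w" "snd w \<in> {a, Suc a} \<Longrightarrow> snd w' \<in> {a, Suc a}"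
    and "\<not> (snd v \<in> {a, Suc a} \<and> snd w \<in> {a, Suc a})"
  shows "cc h N v' w' = cc h N v w"
proof -
  have c1: "snd w' < snd v' \<longleftrightarrow> snd w < snd v" and c2: "snd v' < snd w' \<longleftrightarrow> snd v < snd w"
  proof -
    have "(snd w' < snd v' \<longleftrightarrow> snd w < snd v) \<and> (snd v' < snd w' \<longleftrightarrow> snd v < snd w)"
    proof (cases "snd v \<in> {a, Suc a}")
      case True
      then have "snd w \<notin> {a, Suc a}" using assms(7) by blast
      then show ?thesis using True assms(3-6) by auto
    next
      case False
      then show ?thesis using assms(3-6) by (cases "snd w \<in> {a, Suc a}") auto
    qed
    then show "snd w' < snd v' \<longleftrightarrow> snd w < snd v" "snd v' < snd w' \<longleftrightarrow> snd v < snd w" by auto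
  qed
  show ?thesis by (intro ext) (simp add: cc_def assms(1,2) c1 c2)
qed

lemma NP_split:
  assumes "finite V"
  shows "NP h N V y = Loc h N V a y * Rest h N V a y"
  unfolding NP_def Loc_def Rest_def
  by (rule prod_pairs_split) (use assms in \<open>auto simp: Lset_def\<close>)

lemma NPS_split:
  assumes "finite V"
  shows "NPS h N V a y = LocS h N V a y * Rest h N V a y"
proof -
  have "NPS h N V a y = LocS h N V a y *
     (\<Prod>x\<in>V \<times> V - Lset V a \<times> Lset V a. cc h N (Sn a (fst x)) (Sn a (snd x)) (y (fst x)) (y (snd x)))"
    unfolding NPS_def LocS_def
    by (rule prod_pairs_split) (use assms in \<open>auto simp: Lset_def\<close>)
  also have "(\<Prod>x\<in>V \<times> V - Lset V a \<times> Lset V a. cc h N (Sn a (fst x)) (Sn a (snd x)) (y (fst x)) (y (snd x)))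
     = Rest h N V a y"
    unfolding Rest_def
  proof (rule prod.cong[OF refl])
    fix x assume x: "x \<in> V \<times> V - Lset V a \<times> Lset V a"
    have "cc h N (Sn a (fst x)) (Sn a (snd x)) = cc h N (fst x) (snd x)"
      by (rule cc_T) (use x in \<open>auto simp: Sn_def Lset_def transpose_pos\<close>)
    then show "cc h N (Sn a (fst x)) (Sn a (snd x)) (y (fst x)) (y (snd x))
      = cc h N (fst x) (snd x) (y (fst x)) (y (snd x))" by simp
  qed
  finally show ?thesis .
qed

lemma Rest_T:
  assumes fin: "finite V" and TV: "T ` V = V" and inj: "inj_on T V"
    and f: "\<And>v. fst (T v) = fst v"
    and p1: "\<And>v. snd v \<notin> {a, Suc a} \<Longrightarrow> snd (T v) = snd v"
    and p2: "\<And>v. snd v \<in> {a, Suc a} \<Longrightarrow> snd (T v) \<in> {a, Suc a}"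
  shows "Rest h N V a (y \<circ> T) = Rest h N V a y"
proof -
  define L where "L = Lset V a"
  define R where "R = V \<times> V - L \<times> L"
  define PT where "PT = map_prod T T"
  have LV: "L \<subseteq> V" by (auto simp: L_def Lset_def)
  have TL: "T ` L = L"
  proof
    show "T ` L \<subseteq> L"
    proof
      fix v assume "v \<in> T ` L"
      then obtain u where u: "u \<in> L" "v = T u" by auto
      have "T u \<in> V" using u LV TV by blast
      moreover have "snd (T u) \<in> {a, Suc a}" using p2 u by (auto simp: L_def Lset_def)
      ultimately show "v \<in> L" using u by (simp add: L_def Lset_def)
    qed
    show "L \<subseteq> T ` L"
    proof
      fix v assume v: "v \<in> L"
      then have "v \<in> T ` V" using TV LV by auto
      then obtain u where u: "u \<in> V" "v = T u" by auto
      have "u \<in> L"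
      proof (rule ccontr)
        assume "u \<notin> L"
        then have "snd u \<notin> {a, Suc a}" using u by (auto simp: L_def Lset_def)
        then have "snd v \<notin> {a, Suc a}" using p1 u by auto
        then show False using v by (auto simp: L_def Lset_def)
      qed
      then show "v \<in> T ` L" using u by auto
    qed
  qed
  have injP: "inj_on PT (V \<times> V)" using inj by (auto simp: PT_def inj_on_def)
  have PR: "PT ` R = R"
  proof -
    have "PT ` R = PT ` (V \<times> V) - PT ` (L \<times> L)"
      unfolding R_def by (rule inj_on_image_set_diff[OF injP]) (use LV in auto)
    also have "PT ` (V \<times> V) = V \<times> V" unfolding PT_def using TV by (simp add: map_prod_surj_on)
    also have "PT ` (L \<times> L) = L \<times> L" unfolding PT_def using TL by (simp add: map_prod_surj_on)
    finally show ?thesis by (simp add: R_def)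
  qed
  have injR: "inj_on PT R" using injP by (rule inj_on_subset) (auto simp: R_def)
  have "Rest h N V a y = (\<Prod>x\<in>PT ` R. cc h N (fst x) (snd x) (y (fst x)) (y (snd x)))"
    unfolding Rest_def PR by (simp add: R_def L_def)
  also have "\<dots> = (\<Prod>x\<in>R. cc h N (T (fst x)) (T (snd x)) (y (T (fst x))) (y (T (snd x))))"
    by (subst prod.reindex[OF injR]) (simp add: PT_def comp_def case_prod_beta)
  also have "\<dots> = (\<Prod>x\<in>R. cc h N (fst x) (snd x) (y (T (fst x))) (y (T (snd x))))"
  proof (rule prod.cong[OF refl])
    fix x assume x: "x \<in> R"
    have x3: "\<not> (snd (fst x) \<in> {a, Suc a} \<and> snd (snd x) \<in> {a, Suc a})"
      using x by (cases x) (auto simp: R_def L_def Lset_def)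
    have "cc h N (T (fst x)) (T (snd x)) = cc h N (fst x) (snd x)"
      by (rule cc_T[OF f f p1 p2 p1 p2 x3])
    then show "cc h N (T (fst x)) (T (snd x)) (y (T (fst x))) (y (T (snd x)))
       = cc h N (fst x) (snd x) (y (T (fst x))) (y (T (snd x)))" by simp
  qed
  also have "\<dots> = Rest h N V a (y \<circ> T)" by (simp add: Rest_def R_def L_def)
  finally show ?thesis by simp
qed

lemma TE_invol: "TE E a (TE E a v) = v"
  by (simp add: TE_def)

lemma TE_props:
  "fst (TE E a v) = fst v"
  "snd v \<notin> {a, Suc a} \<Longrightarrow> snd (TE E a v) = snd v"
  "snd v \<in> {a, Suc a} \<Longrightarrow> snd (TE E a v) \<in> {a, Suc a}"
  by (auto simp: TE_def transpose_def)

lemma TE_inj: "inj_on (TE E a) V"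
  by (metis TE_invol inj_on_inverseI)

lemma TE_image:
  assumes "\<And>m. m \<in> E \<Longrightarrow> (a \<in> PP J m \<longleftrightarrow> Suc a \<in> PP J m)"
  shows "TE E a ` VV N J = VV N J"
proof -
  have sub: "TE E a ` VV N J \<subseteq> VV N J"
  proof
    fix v assume "v \<in> TE E a ` VV N J"
    then obtain u where u: "u \<in> VV N J" "v = TE E a u" by auto
    show "v \<in> VV N J"
      using u assms[of "fst u"] by (cases u) (auto simp: TE_def VV_def transpose_def)
  qed
  moreover have "VV N J \<subseteq> TE E a ` VV N J"
  proof
    fix v assume "v \<in> VV N J"
    then have "TE E a v \<in> VV N J" using sub by auto
    then show "v \<in> TE E a ` VV N J" using TE_invol[of E a v] by (metis image_eqI)
  qed
  ultimately show ?thesis by blast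
qed




lemma idx_transpose:
  assumes fin: "finite (PP J m)" and "a \<in> PP J m" "Suc a \<in> PP J m" "p \<in> PP J m"
  shows "transpose (idx J m a) (idx J m (Suc a)) (idx J m p) = idx J m (transpose a (Suc a) p)"
proof -
  have inj: "inj_on (idx J m) (PP J m)" using idx_bij[OF fin] by (simp add: bij_betw_def)
  show ?thesis
  proof (cases "p = a \<or> p = Suc a")
    case True then show ?thesis by auto
  next
    case False
    then have "idx J m p \<noteq> idx J m a" "idx J m p \<noteq> idx J m (Suc a)"
      using inj assms by (auto dest: inj_onD)
    then show ?thesis using False by (simp add: transpose_def)
  qed
qed

lemma avg_one:
  assumes fin: "\<And>m. finite (PP J m)"
    and card: "\<And>m. m \<in> {1..N} \<Longrightarrow> card (PP J m) = lsum lam m"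
    and E: "E \<subseteq> {1..N-1}"
    and both: "\<And>m. m \<in> E \<Longrightarrow> a \<in> PP J m \<and> Suc a \<in> PP J m"
    and resp: "\<And>y y'. (\<And>v. v \<in> VV N J \<Longrightarrow> y v = y' v) \<Longrightarrow> G y = G y'"
  shows "(\<Sum>\<rho>\<in>symperms N lam. G (Yv N J t u \<rho>)) = (\<Sum>\<rho>\<in>symperms N lam. G (Yv N J t u \<rho> \<circ> TE E a))"
proof -
  define \<tau> where "\<tau> m = (if m \<in> E then transpose (idx J m a) (idx J m (Suc a)) else id)" for m
  have tau: "\<tau> m permutes {1..lsum lam m}" if m: "m \<in> {1..N-1}" for m
  proof (cases "m \<in> E")
    case True
    have "idx J m a \<in> {1..card (PP J m)}" "idx J m (Suc a) \<in> {1..card (PP J m)}"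
      using pidx_idx(2)[OF fin] both[OF True] by auto
    moreover have "card (PP J m) = lsum lam m" using card m by auto
    ultimately show ?thesis using True by (simp add: \<tau>_def permutes_swap_id)
  qed (simp add: \<tau>_def permutes_id)
  have "(\<Sum>\<rho>\<in>symperms N lam. G (Yv N J t u \<rho>)) = (\<Sum>\<rho>\<in>symperms N lam. G (Yv N J t u (Mre N \<tau> \<rho>)))"
    by (rule symperms_reindex[OF tau])
  also have "\<dots> = (\<Sum>\<rho>\<in>symperms N lam. G (Yv N J t u \<rho> \<circ> TE E a))"
  proof (rule sum.cong[OF refl])
    fix \<rho> assume r: "\<rho> \<in> symperms N lam"
    show "G (Yv N J t u (Mre N \<tau> \<rho>)) = G (Yv N J t u \<rho> \<circ> TE E a)"
    proof (rule resp)
      fix v assume v: "v \<in> VV N J"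
      obtain m p where vmp: "v = (m,p)" by (cases v)
      have m: "m \<in> {1..N}" and p: "p \<in> PP J m" using v vmp by (auto simp: VV_def)
      show "Yv N J t u (Mre N \<tau> \<rho>) v = (Yv N J t u \<rho> \<circ> TE E a) v"
      proof (cases "m = N")
        case True
        have "m \<notin> E"
        proof
          assume "m \<in> E" then have "m \<in> {1..N-1}" using E by blast
          then show False using True by auto
        qed
        then show ?thesis using True by (simp add: vmp Yv_def tvar_def TE_def)
      next
        case False
        then have m': "m \<in> {1..N-1}" using m by auto
        show ?thesis
        proof (cases "m \<in> E")
          case True
          have "\<tau> m (idx J m p) = idx J m (transpose a (Suc a) p)"
            using idx_transpose[OF fin both[OF True, THEN conjunct1] both[OF True, THEN conjunct2] p] True
            by (simp add: \<tau>_def)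
          then show ?thesis using True False m' by (simp add: vmp Yv_def tvar_def TE_def Mre_def)
        next
          case F: False
          then show ?thesis using False m' by (simp add: vmp Yv_def tvar_def TE_def Mre_def \<tau>_def)
        qed
      qed
    qed
  qed
  finally show ?thesis .
qed

lemma avg:
  assumes fin: "\<And>m. finite (PP J m)"
    and card: "\<And>m. m \<in> {1..N} \<Longrightarrow> card (PP J m) = lsum lam m"
    and B: "B \<subseteq> {1..N-1}"
    and both: "\<And>m. m \<in> B \<Longrightarrow> a \<in> PP J m \<and> Suc a \<in> PP J m"
    and resp: "\<And>y y'. (\<And>v. v \<in> VV N J \<Longrightarrow> y v = y' v) \<Longrightarrow> G y = G y'"
  shows "of_nat (card (Pow B)) * (\<Sum>\<rho>\<in>symperms N lam. G (Yv N J t u \<rho>))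
       = (\<Sum>\<rho>\<in>symperms N lam. \<Sum>E\<in>Pow B. G (Yv N J t u \<rho> \<circ> TE E a))"
proof -
  have "(\<Sum>\<rho>\<in>symperms N lam. \<Sum>E\<in>Pow B. G (Yv N J t u \<rho> \<circ> TE E a))
      = (\<Sum>E\<in>Pow B. \<Sum>\<rho>\<in>symperms N lam. G (Yv N J t u \<rho> \<circ> TE E a))"
    by (rule sum.swap)
  also have "\<dots> = (\<Sum>E\<in>Pow B. \<Sum>\<rho>\<in>symperms N lam. G (Yv N J t u \<rho>))"
  proof (rule sum.cong[OF refl])
    fix E assume "E \<in> Pow B"
    then have "E \<subseteq> B" by auto
    then show "(\<Sum>\<rho>\<in>symperms N lam. G (Yv N J t u \<rho> \<circ> TE E a)) = (\<Sum>\<rho>\<in>symperms N lam. G (Yv N J t u \<rho>))"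
      using avg_one[where E=E and a=a and t=t and u=u and N=N and J=J and lam=lam and G=G, OF fin card _ _ resp] B both
      by (metis (no_types, lifting) subset_trans subsetD)
  qed
  also have "\<dots> = of_nat (card (Pow B)) * (\<Sum>\<rho>\<in>symperms N lam. G (Yv N J t u \<rho>))"
    by simp
  finally show ?thesis by simp
qed

definition LF :: "complex \<Rightarrow> nat \<Rightarrow> nat \<Rightarrow> nat \<Rightarrow> (nat \<Rightarrow> complex) \<Rightarrow> (nat \<Rightarrow> complex) \<Rightarrow> complex" where
  "LF h N k l X Y = (\<Prod>m\<in>{k..<N}. if l \<le> Suc m then 1 - Y (Suc m) / X m else 1)
     * (\<Prod>m\<in>{l..<N}. if k \<le> Suc m then 1 - h * X (Suc m) / Y m else 1)
     * (\<Prod>m\<in>{max k l..<N}. (1 - h * Y m / X m) / (1 - Y m / X m))"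

lemma prod_single_filter:
  "finite A \<Longrightarrow> (\<Prod>x\<in>{x\<in>A. P \<and> x = c}. g x) = (if P \<and> c \<in> A then g c else 1)"
proof -
  assume "finite A"
  have "{x\<in>A. P \<and> x = c} = (if P \<and> c \<in> A then {c} else {})" by auto
  then show ?thesis by simp
qed

lemma prod_atMost_drop:
  "(\<Prod>m\<in>{k..N::nat}. if m < N \<and> P m then f m else (1::complex)) = (\<Prod>m\<in>{k..<N}. if P m then f m else 1)"
proof (cases "k \<le> N")
  case True
  then have "{k..N} = insert N {k..<N}" by auto
  then show ?thesis by (simp add: prod.insert)
next
  case False
  then show ?thesis by simp
qed

lemma Loc_formula:
  shows "(\<Prod>v\<in>(\<lambda>m. (m,a)) ` {k..N} \<union> (\<lambda>m. (m,Suc a)) ` {l..N}.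
           \<Prod>w\<in>(\<lambda>m. (m,a)) ` {k..N} \<union> (\<lambda>m. (m,Suc a)) ` {l..N}. cc h N v w (y v) (y w))
       = LF h N k l (\<lambda>m. y (m,a)) (\<lambda>m. y (m,Suc a))"
proof -
  define La where "La = (\<lambda>m. (m,a)) ` {k..N}"
  define Lb where "Lb = (\<lambda>m. (m,Suc a)) ` {l..N}"
  define X where "X = (\<lambda>m. y (m,a))"
  define Y where "Y = (\<lambda>m. y (m,Suc a))"
  have disj: "La \<inter> Lb = {}" by (auto simp: La_def Lb_def)
  have fin: "finite La" "finite Lb" by (auto simp: La_def Lb_def)
  have ia: "inj_on (\<lambda>m. (m,a)) A" and ib: "inj_on (\<lambda>m. (m,Suc a)) A" for A by (auto simp: inj_on_def)
  have s1: "(\<Prod>v\<in>La \<union> Lb. \<Prod>w\<in>La \<union> Lb. cc h N v w (y v) (y w))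
      = (\<Prod>v\<in>La. (\<Prod>w\<in>La. cc h N v w (y v) (y w)) * (\<Prod>w\<in>Lb. cc h N v w (y v) (y w)))
      * (\<Prod>v\<in>Lb. (\<Prod>w\<in>La. cc h N v w (y v) (y w)) * (\<Prod>w\<in>Lb. cc h N v w (y v) (y w)))"
    using disj fin by (simp add: prod.union_disjoint)
  have s2: "(\<Prod>v\<in>La. (\<Prod>w\<in>La. cc h N v w (y v) (y w)) * (\<Prod>w\<in>Lb. cc h N v w (y v) (y w)))
      = (\<Prod>m\<in>{k..N}. (\<Prod>m'\<in>{k..N}. cc h N (m,a) (m',a) (X m) (X m')) * (\<Prod>m'\<in>{l..N}. cc h N (m,a) (m',Suc a) (X m) (Y m')))"
    unfolding La_def Lb_def X_def Y_def by (simp add: prod.reindex[OF ia] prod.reindex[OF ib])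
  have s3: "(\<Prod>v\<in>Lb. (\<Prod>w\<in>La. cc h N v w (y v) (y w)) * (\<Prod>w\<in>Lb. cc h N v w (y v) (y w)))
      = (\<Prod>m\<in>{l..N}. (\<Prod>m'\<in>{k..N}. cc h N (m,Suc a) (m',a) (Y m) (X m')) * (\<Prod>m'\<in>{l..N}. cc h N (m,Suc a) (m',Suc a) (Y m) (Y m')))"
    unfolding La_def Lb_def X_def Y_def by (simp add: prod.reindex[OF ia] prod.reindex[OF ib])
  have c1: "cc h N (m,a) (m',a) U V = 1" for m m' U V by (simp add: cc_def)
  have c4: "cc h N (m,Suc a) (m',Suc a) U V = 1" for m m' U V by (simp add: cc_def)
  have c2: "(\<Prod>m'\<in>{l..N}. cc h N (m,a) (m',Suc a) (X m) (Y m'))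
     = (if m < N \<and> l \<le> Suc m then 1 - Y (Suc m) / X m else 1)
     * (if m < N \<and> l \<le> m then (1 - h * Y m / X m) / (1 - Y m / X m) else 1)" if "m \<le> N" for m
  proof -
    have "(\<Prod>m'\<in>{l..N}. cc h N (m,a) (m',Suc a) (X m) (Y m'))
      = (\<Prod>m'\<in>{l..N}. if m < N \<and> m' = Suc m then 1 - Y m' / X m
           else if m < N \<and> m' = m then (1 - h * Y m' / X m) / (1 - Y m' / X m) else 1)"
      by (rule prod.cong[OF refl]) (auto simp: cc_def)
    also have "\<dots> = (\<Prod>m'\<in>{m'\<in>{l..N}. m < N \<and> m' = Suc m}. 1 - Y m' / X m)
        * (\<Prod>m'\<in>{m'\<in>{l..N}. m < N \<and> m' = m}. (1 - h * Y m' / X m) / (1 - Y m' / X m))"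
      by (rule prod_if2) auto
    also have "\<dots> = (if m < N \<and> l \<le> Suc m then 1 - Y (Suc m) / X m else 1)
     * (if m < N \<and> l \<le> m then (1 - h * Y m / X m) / (1 - Y m / X m) else 1)" unfolding prod_single_filter[OF finite_atLeastAtMost] using that by simp
    finally show ?thesis .
  qed
  have c3: "(\<Prod>m'\<in>{k..N}. cc h N (m,Suc a) (m',a) (Y m) (X m'))
     = (if m < N \<and> k \<le> Suc m then 1 - h * X (Suc m) / Y m else 1)" for m
  proof -
    have "(\<Prod>m'\<in>{k..N}. cc h N (m,Suc a) (m',a) (Y m) (X m'))
      = (\<Prod>m'\<in>{m'\<in>{k..N}. m < N \<and> m' = Suc m}. 1 - h * X m' / Y m)"
      by (subst prod.inter_filter) (auto simp: cc_def intro!: prod.cong)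
    also have "\<dots> = (if m < N \<and> k \<le> Suc m then 1 - h * X (Suc m) / Y m else 1)" unfolding prod_single_filter[OF finite_atLeastAtMost] by simp
    finally show ?thesis .
  qed
  have A: "(\<Prod>m\<in>{k..N}. (\<Prod>m'\<in>{k..N}. cc h N (m,a) (m',a) (X m) (X m')) * (\<Prod>m'\<in>{l..N}. cc h N (m,a) (m',Suc a) (X m) (Y m')))
     = (\<Prod>m\<in>{k..<N}. if l \<le> Suc m then 1 - Y (Suc m) / X m else 1)
     * (\<Prod>m\<in>{k..<N}. if l \<le> m then (1 - h * Y m / X m) / (1 - Y m / X m) else 1)"
  proof -
    have "(\<Prod>m\<in>{k..N}. (\<Prod>m'\<in>{k..N}. cc h N (m,a) (m',a) (X m) (X m')) * (\<Prod>m'\<in>{l..N}. cc h N (m,a) (m',Suc a) (X m) (Y m')))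
      = (\<Prod>m\<in>{k..N}. (if m < N \<and> l \<le> Suc m then 1 - Y (Suc m) / X m else 1)
     * (if m < N \<and> l \<le> m then (1 - h * Y m / X m) / (1 - Y m / X m) else 1))"
      by (rule prod.cong[OF refl]) (simp add: c1 c2)
    also have "\<dots> = (\<Prod>m\<in>{k..<N}. if l \<le> Suc m then 1 - Y (Suc m) / X m else 1)
     * (\<Prod>m\<in>{k..<N}. if l \<le> m then (1 - h * Y m / X m) / (1 - Y m / X m) else 1)" by (simp add: prod.distrib prod_atMost_drop)
    finally show ?thesis .
  qed
  have B: "(\<Prod>m\<in>{l..N}. (\<Prod>m'\<in>{k..N}. cc h N (m,Suc a) (m',a) (Y m) (X m')) * (\<Prod>m'\<in>{l..N}. cc h N (m,Suc a) (m',Suc a) (Y m) (Y m')))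
     = (\<Prod>m\<in>{l..<N}. if k \<le> Suc m then 1 - h * X (Suc m) / Y m else 1)"
    by (simp add: c3 c4 prod_atMost_drop)
  have C: "(\<Prod>m\<in>{k..<N}. if l \<le> m then (1 - h * Y m / X m) / (1 - Y m / X m) else 1)
     = (\<Prod>m\<in>{max k l..<N}. (1 - h * Y m / X m) / (1 - Y m / X m))"
  proof -
    have "{m\<in>{k..<N}. l \<le> m} = {max k l..<N}" by auto
    then show ?thesis by (simp add: prod.inter_filter[symmetric])
  qed
  show ?thesis
    unfolding La_def[symmetric] Lb_def[symmetric] s1 s2 s3 A B C LF_def X_def[symmetric] Y_def[symmetric]
    by (simp add: ac_simps)
qed

lemma ff_prod:
  "(\<Prod>m\<in>A. 1 - Y (Suc m) / X m) * (\<Prod>m\<in>A. 1 - h * X (Suc m) / Y m)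
     * (\<Prod>m\<in>A. (1 - h * Y m / X m) / (1 - Y m / X m))
   = (\<Prod>m\<in>A. ff h (X m) (Y m) (X (Suc m)) (Y (Suc m)))"
  by (simp only: ff_def prod.distrib)

lemma LF_eq:
  "LF h N k k X Y = (\<Prod>m\<in>{k..<N}. ff h (X m) (Y m) (X (Suc m)) (Y (Suc m)))"
proof -
  have "LF h N k k X Y = (\<Prod>m\<in>{k..<N}. 1 - Y (Suc m) / X m) * (\<Prod>m\<in>{k..<N}. 1 - h * X (Suc m) / Y m)
     * (\<Prod>m\<in>{k..<N}. (1 - h * Y m / X m) / (1 - Y m / X m))"
  proof -
    have "(\<Prod>m\<in>{k..<N}. if k \<le> Suc m then 1 - Y (Suc m) / X m else 1) = (\<Prod>m\<in>{k..<N}. 1 - Y (Suc m) / X m)"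
      by (intro prod.cong refl) auto
    moreover have "(\<Prod>m\<in>{k..<N}. if k \<le> Suc m then 1 - h * X (Suc m) / Y m else 1) = (\<Prod>m\<in>{k..<N}. 1 - h * X (Suc m) / Y m)"
      by (intro prod.cong refl) auto
    ultimately show ?thesis unfolding LF_def by simp
  qed
  then show ?thesis by (simp add: ff_prod)
qed

lemma filter_shift:
  assumes "k < l"
  shows "{m\<in>{k..<N}. l \<le> Suc m} = (if l \<le> N then insert (l - 1) {l..<N} else {})"
  using assms by auto

lemma LF_lt:
  assumes "k < l" "l \<le> N"
  shows "LF h N k l X Y = (1 - Y l / X (l - 1)) * (\<Prod>m\<in>{l..<N}. ff h (X m) (Y m) (X (Suc m)) (Y (Suc m)))"
proof -
  have e1: "(\<Prod>m\<in>{k..<N}. if l \<le> Suc m then 1 - Y (Suc m) / X m else 1)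
      = (1 - Y l / X (l - 1)) * (\<Prod>m\<in>{l..<N}. 1 - Y (Suc m) / X m)"
  proof -
    have "(\<Prod>m\<in>{k..<N}. if l \<le> Suc m then 1 - Y (Suc m) / X m else 1)
        = (\<Prod>m\<in>{m\<in>{k..<N}. l \<le> Suc m}. 1 - Y (Suc m) / X m)"
      by (rule prod.inter_filter[symmetric]) simp
    also have "\<dots> = (\<Prod>m\<in>insert (l - 1) {l..<N}. 1 - Y (Suc m) / X m)"
      using filter_shift[OF assms(1), of N] assms by simp
    also have "\<dots> = (1 - Y l / X (l - 1)) * (\<Prod>m\<in>{l..<N}. 1 - Y (Suc m) / X m)"
      using assms by (subst prod.insert) auto
    finally show ?thesis .
  qed
  have e2: "(\<Prod>m\<in>{l..<N}. if k \<le> Suc m then 1 - h * X (Suc m) / Y m else 1)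
      = (\<Prod>m\<in>{l..<N}. 1 - h * X (Suc m) / Y m)"
    using assms by (intro prod.cong refl) auto
  have e3: "max k l = l" using assms by simp
  show ?thesis unfolding LF_def e1 e2 e3 by (simp add: ff_prod[symmetric] ac_simps)
qed

lemma LF_gt:
  assumes "l < k" "k \<le> N"
  shows "LF h N k l X Y = (1 - h * X k / Y (k - 1)) * (\<Prod>m\<in>{k..<N}. ff h (X m) (Y m) (X (Suc m)) (Y (Suc m)))"
proof -
  have e2: "(\<Prod>m\<in>{l..<N}. if k \<le> Suc m then 1 - h * X (Suc m) / Y m else 1)
      = (1 - h * X k / Y (k - 1)) * (\<Prod>m\<in>{k..<N}. 1 - h * X (Suc m) / Y m)"
  proof -
    have "(\<Prod>m\<in>{l..<N}. if k \<le> Suc m then 1 - h * X (Suc m) / Y m else 1)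
        = (\<Prod>m\<in>{m\<in>{l..<N}. k \<le> Suc m}. 1 - h * X (Suc m) / Y m)"
      by (rule prod.inter_filter[symmetric]) simp
    also have "\<dots> = (\<Prod>m\<in>insert (k - 1) {k..<N}. 1 - h * X (Suc m) / Y m)"
      using filter_shift[OF assms(1), of N] assms by simp
    also have "\<dots> = (1 - h * X k / Y (k - 1)) * (\<Prod>m\<in>{k..<N}. 1 - h * X (Suc m) / Y m)"
      using assms by (subst prod.insert) auto
    finally show ?thesis .
  qed
  have e1: "(\<Prod>m\<in>{k..<N}. if l \<le> Suc m then 1 - Y (Suc m) / X m else 1)
      = (\<Prod>m\<in>{k..<N}. 1 - Y (Suc m) / X m)"
    using assms by (intro prod.cong refl) auto
  have e3: "max k l = k" using assms by simp
  show ?thesis unfolding LF_def e1 e2 e3 by (simp add: ff_prod[symmetric] ac_simps)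
qed




lemma sw_below: "m \<notin> E \<Longrightarrow> sw E X Y m = X m"
  by (simp add: sw_def)

lemma LF_sum_lt_R:
  assumes "k < l" "l \<le> N"
  shows "(\<Sum>E\<in>Pow {l..<N}. LF h N k l (sw E X Y) (sw E Y X))
       = chain h (\<lambda>A B. 1 - B / X (l - 1)) X Y l (N - l) (X N) (Y N)"
proof -
  have "(\<Sum>E\<in>Pow {l..<N}. LF h N k l (sw E X Y) (sw E Y X))
     = (\<Sum>E\<in>Pow {l..<l + (N - l)}. (\<lambda>A B. 1 - B / X (l - 1)) (sw E X Y l) (sw E Y X l) *
      (\<Prod>m\<in>{l..<l + (N - l)}. ff h (sw E X Y m) (sw E Y X m) (sw E X Y (Suc m)) (sw E Y X (Suc m))))"
  proof -
    have lN: "l + (N - l) = N" using assms by simp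
    show ?thesis unfolding lN
    proof (rule sum.cong[OF refl])
      fix E assume "E \<in> Pow {l..<N}"
      then have Es: "E \<subseteq> {l..<N}" by auto
      have "l - 1 \<notin> E"
      proof
        assume "l - 1 \<in> E" then have "l - 1 \<in> {l..<N}" using Es by blast
        then show False using assms by auto
      qed
      then show "LF h N k l (sw E X Y) (sw E Y X) = (\<lambda>A B. 1 - B / X (l - 1)) (sw E X Y l) (sw E Y X l) *
        (\<Prod>m\<in>{l..<N}. ff h (sw E X Y m) (sw E Y X m) (sw E X Y (Suc m)) (sw E Y X (Suc m)))"
        using LF_lt[OF assms] by (simp add: sw_below)
    qed
  qed
  also have "\<dots> = chain h (\<lambda>A B. 1 - B / X (l - 1)) X Y l (N - l) (X (l + (N - l))) (Y (l + (N - l)))"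
    by (rule chain_sum)
  finally show ?thesis using assms by simp
qed

lemma LF_sum_gt_Q:
  assumes "k < l" "l \<le> N"
  shows "(\<Sum>E\<in>Pow {l..<N}. LF h N l k (sw E Y X) (sw E X Y))
       = chain h (\<lambda>A B. 1 - h * A / X (l - 1)) X Y l (N - l) (Y N) (X N)"
proof -
  have "(\<Sum>E\<in>Pow {l..<N}. LF h N l k (sw E Y X) (sw E X Y))
     = (\<Sum>E\<in>Pow {l..<l + (N - l)}. (\<lambda>A B. 1 - h * A / X (l - 1)) (sw E Y X l) (sw E X Y l) *
      (\<Prod>m\<in>{l..<l + (N - l)}. ff h (sw E Y X m) (sw E X Y m) (sw E Y X (Suc m)) (sw E X Y (Suc m))))"
  proof -
    have lN: "l + (N - l) = N" using assms by simp
    show ?thesis unfolding lN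
    proof (rule sum.cong[OF refl])
      fix E assume "E \<in> Pow {l..<N}"
      then have Es: "E \<subseteq> {l..<N}" by auto
      have "l - 1 \<notin> E"
      proof
        assume "l - 1 \<in> E" then have "l - 1 \<in> {l..<N}" using Es by blast
        then show False using assms by auto
      qed
      then show "LF h N l k (sw E Y X) (sw E X Y) = (\<lambda>A B. 1 - h * A / X (l - 1)) (sw E Y X l) (sw E X Y l) *
        (\<Prod>m\<in>{l..<N}. ff h (sw E Y X m) (sw E X Y m) (sw E Y X (Suc m)) (sw E X Y (Suc m)))"
        using LF_gt[OF assms] by (simp add: sw_below)
    qed
  qed
  also have "\<dots> = chain h (\<lambda>A B. 1 - h * A / X (l - 1)) Y X l (N - l) (Y (l + (N - l))) (X (l + (N - l)))"
    by (rule chain_sum)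
  finally show ?thesis using assms by (simp add: chain_swap)
qed

lemma LF_sum_eq:
  assumes "k \<le> N"
  shows "(\<Sum>E\<in>Pow {k..<N}. LF h N k k (sw E X Y) (sw E Y X))
       = chain h (\<lambda>A B. 1) X Y k (N - k) (X N) (Y N)"
proof -
  have kN: "k + (N - k) = N" using assms by simp
  have "(\<Sum>E\<in>Pow {k..<N}. LF h N k k (sw E X Y) (sw E Y X))
     = (\<Sum>E\<in>Pow {k..<k + (N - k)}. (\<lambda>A B. 1) (sw E X Y k) (sw E Y X k) *
      (\<Prod>m\<in>{k..<k + (N - k)}. ff h (sw E X Y m) (sw E Y X m) (sw E X Y (Suc m)) (sw E Y X (Suc m))))"
    unfolding kN by (simp add: LF_eq)
  also have "\<dots> = chain h (\<lambda>A B. 1) X Y k (N - k) (X (k + (N - k))) (Y (k + (N - k)))"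
    by (rule chain_sum)
  finally show ?thesis using kN by simp
qed

lemma nd_shift:
  assumes "\<And>m. m \<in> {n0..<N} \<Longrightarrow> X m \<noteq> 0 \<and> Y m \<noteq> 0 \<and> X m \<noteq> Y m"
    and "i < N - (n0::nat)"
  shows "X (n0+i) \<noteq> 0 \<and> Y (n0+i) \<noteq> 0 \<and> X (n0+i) \<noteq> Y (n0+i)"
proof -
  have "n0 + i \<in> {n0..<N}" using assms(2) by auto
  then show ?thesis using assms(1) by blast
qed

lemma case_eq:
  assumes "k \<le> N" and nd: "\<And>m. m \<in> {k..<N} \<Longrightarrow> X m \<noteq> 0 \<and> Y m \<noteq> 0 \<and> X m \<noteq> Y m"
  shows "(\<Sum>E\<in>Pow {k..<N}. LF h N k k (sw E Y X) (sw E X Y))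
       = (\<Sum>E\<in>Pow {k..<N}. LF h N k k (sw E X Y) (sw E Y X))"
  unfolding LF_sum_eq[OF assms(1)] LF_sum_eq[OF assms(1), where h=h and X=Y and Y=X] chain_swap[of h _ Y X]
  by (rule chain_sym, simp, rule nd_shift[OF nd], assumption)

lemma case_lt:
  assumes "k < l" "l \<le> N" and nd: "\<And>m. m \<in> {l..<N} \<Longrightarrow> X m \<noteq> 0 \<and> Y m \<noteq> 0 \<and> X m \<noteq> Y m"
  shows "(Y N - h * X N) * (\<Sum>E\<in>Pow {l..<N}. LF h N l k (sw E Y X) (sw E X Y))
     = h * (Y N - X N) * (\<Sum>E\<in>Pow {l..<N}. LF h N k l (sw E X Y) (sw E Y X))
     + (1 - h) * Y N * (\<Sum>E\<in>Pow {l..<N}. LF h N l k (sw E (Y(N := X N)) (X(N := Y N))) (sw E (X(N := Y N)) (Y(N := X N))))"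
proof -
  define b :: "complex \<Rightarrow> complex \<Rightarrow> complex" where "b = (\<lambda>A B. 1 - B / X (l - 1))"
  define bS :: "complex \<Rightarrow> complex \<Rightarrow> complex" where "bS = (\<lambda>A B. 1 - h * A / X (l - 1))"
  have Q2: "(\<Sum>E\<in>Pow {l..<N}. LF h N l k (sw E (Y(N := X N)) (X(N := Y N))) (sw E (X(N := Y N)) (Y(N := X N))))
     = chain h bS X Y l (N - l) (X N) (Y N)"
  proof -
    have "l - 1 \<noteq> N" using assms by arith
    then have "(X(N := Y N)) (l - 1) = X (l - 1)" by simp
    then have "(\<Sum>E\<in>Pow {l..<N}. LF h N l k (sw E (Y(N := X N)) (X(N := Y N))) (sw E (X(N := Y N)) (Y(N := X N))))
      = chain h bS (X(N := Y N)) (Y(N := X N)) l (N - l) (X N) (Y N)"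
      using LF_sum_gt_Q[OF assms(1,2), where h=h and X="X(N := Y N)" and Y="Y(N := X N)"] by (simp add: bS_def)
    also have "chain h bS (X(N := Y N)) (Y(N := X N)) l (N - l) = chain h bS X Y l (N - l)"
      by (rule chain_cong) auto
    finally show ?thesis .
  qed
  have base: "(B - h*A) * bS B A = h*(B-A)*b A B + (1-h)*(1*B+(1-1)*A)*bS A B" for A B
    unfolding b_def bS_def divide_inverse by algebra
  have rel: "(B - h*A) * chain h bS X Y l (N - l) B A = h*(B-A)*chain h b X Y l (N - l) A B
           + (1-h)*(1*B+(1-1)*A)*chain h bS X Y l (N - l) A B" for A B
    by (rule chain_rel[OF base], rule nd_shift[OF nd], assumption)
  show ?thesis
    unfolding Q2 LF_sum_lt_R[OF assms(1,2)] LF_sum_gt_Q[OF assms(1,2)] b_def[symmetric] bS_def[symmetric]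
    using rel[where A="X N" and B="Y N"] by simp
qed

lemma case_gt:
  assumes "l < k" "k \<le> N" and nd: "\<And>m. m \<in> {k..<N} \<Longrightarrow> X m \<noteq> 0 \<and> Y m \<noteq> 0 \<and> X m \<noteq> Y m"
  shows "(Y N - h * X N) * (\<Sum>E\<in>Pow {k..<N}. LF h N l k (sw E Y X) (sw E X Y))
     = (Y N - X N) * (\<Sum>E\<in>Pow {k..<N}. LF h N k l (sw E X Y) (sw E Y X))
     + (1 - h) * X N * (\<Sum>E\<in>Pow {k..<N}. LF h N l k (sw E (Y(N := X N)) (X(N := Y N))) (sw E (X(N := Y N)) (Y(N := X N))))"
proof -
  define b :: "complex \<Rightarrow> complex \<Rightarrow> complex" where "b = (\<lambda>A B. 1 - h * A / Y (k - 1))"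
  define bS :: "complex \<Rightarrow> complex \<Rightarrow> complex" where "bS = (\<lambda>A B. 1 - B / Y (k - 1))"
  have R: "(\<Sum>E\<in>Pow {k..<N}. LF h N k l (sw E X Y) (sw E Y X)) = chain h b X Y k (N - k) (X N) (Y N)"
    using LF_sum_gt_Q[OF assms(1,2), where h=h and X=Y and Y=X] by (simp add: b_def chain_swap[of h _ Y X])
  have Q1: "(\<Sum>E\<in>Pow {k..<N}. LF h N l k (sw E Y X) (sw E X Y)) = chain h bS X Y k (N - k) (Y N) (X N)"
    using LF_sum_lt_R[OF assms(1,2), where h=h and X=Y and Y=X] by (simp add: bS_def chain_swap[of h _ Y X])
  have Q2: "(\<Sum>E\<in>Pow {k..<N}. LF h N l k (sw E (Y(N := X N)) (X(N := Y N))) (sw E (X(N := Y N)) (Y(N := X N))))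
     = chain h bS X Y k (N - k) (X N) (Y N)"
  proof -
    have "k - 1 \<noteq> N" using assms by arith
    then have "(Y(N := X N)) (k - 1) = Y (k - 1)" by simp
    then have "(\<Sum>E\<in>Pow {k..<N}. LF h N l k (sw E (Y(N := X N)) (X(N := Y N))) (sw E (X(N := Y N)) (Y(N := X N))))
      = chain h bS (Y(N := X N)) (X(N := Y N)) k (N - k) (X N) (Y N)"
      using LF_sum_lt_R[OF assms(1,2), where h=h and X="Y(N := X N)" and Y="X(N := Y N)"] by (simp add: bS_def)
    also have "chain h bS (Y(N := X N)) (X(N := Y N)) k (N - k) = chain h bS X Y k (N - k)"
      by (subst chain_swap[of h _ "Y(N := X N)"], rule chain_cong) auto
    finally show ?thesis .
  qed
  have base: "(B - h*A) * bS B A = 1*(B-A)*b A B + (1-h)*(0*B+(1-0)*A)*bS A B" for A B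
    unfolding b_def bS_def divide_inverse by algebra
  have rel: "(B - h*A) * chain h bS X Y k (N - k) B A = 1*(B-A)*chain h b X Y k (N - k) A B
           + (1-h)*(0*B+(1-0)*A)*chain h bS X Y k (N - k) A B" for A B
    by (rule chain_rel[OF base], rule nd_shift[OF nd], assumption)
  show ?thesis
    unfolding Q2 R Q1
    using rel[where A="X N" and B="Y N"] by simp
qed




lemma pidx_range:
  assumes "PP J N = {1..n}" "c \<in> {1..n}"
  shows "pidx J N c = c"
proof -
  have e: "sorted_list_of_set {1..n} = [1..<Suc n]"
    by (metis atLeastLessThanSuc_atLeastAtMost sorted_list_of_set_range)
  have "[1..<Suc n] ! (c - 1) = 1 + (c - 1)" by (rule nth_upt) (use assms in auto)
  then show ?thesis using assms(2) unfolding pidx_PP assms(1) e by simp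
qed

lemma idx_N:
  assumes "PP J N = {1..n}" "p \<in> {1..n}"
  shows "idx J N p = p"
proof -
  have "finite (PP J N)" "p \<in> {1..card (PP J N)}" using assms by auto
  from idx_pidx[OF this] show ?thesis using pidx_range[OF assms] by simp
qed

lemma Yv_N:
  assumes "PP J N = {1..n}" "p \<in> {1..n}"
  shows "Yv N J t u \<rho> (N,p) = u p"
  using idx_N[OF assms] by (simp add: Yv_def tvar_def)

lemma Yv_lt: "m \<noteq> N \<Longrightarrow> Yv N J t u \<rho> (m,p) = t m (\<rho> m (idx J m p))"
  by (simp add: Yv_def tvar_def)

lemma NP_cong: "(\<And>v. v \<in> V \<Longrightarrow> y v = y' v) \<Longrightarrow> NP h N V y = NP h N V y'"
  unfolding NP_def by (intro prod.cong refl) auto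

lemma NPS_cong: "(\<And>v. v \<in> V \<Longrightarrow> y v = y' v) \<Longrightarrow> NPS h N V a y = NPS h N V a y'"
  unfolding NPS_def by (intro prod.cong refl) auto

lemma prod2_reindex:
  assumes "inj_on S L"
  shows "(\<Prod>v\<in>S ` L. \<Prod>w\<in>S ` L. G v w) = (\<Prod>v\<in>L. \<Prod>w\<in>L. G (S v) (S w))"
proof -
  have "(\<Prod>v\<in>S ` L. \<Prod>w\<in>S ` L. G v w) = (\<Prod>v\<in>L. \<Prod>w\<in>S ` L. G (S v) w)"
    by (rule prod.reindex[OF assms, unfolded comp_def])
  also have "\<dots> = (\<Prod>v\<in>L. \<Prod>w\<in>L. G (S v) (S w))"
    by (rule prod.cong[OF refl]) (rule prod.reindex[OF assms, unfolded comp_def])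
  finally show ?thesis .
qed

lemma Sn_invol: "Sn a (Sn a v) = v"
  by (simp add: Sn_def)

lemma Sn_inj: "inj_on (Sn a) V"
  by (metis Sn_invol inj_on_inverseI)

lemma TE_comp_N:
  assumes "N \<notin> E"
  shows "TE E a (TE {N} a v) = TE (insert N E) a v"
  using assms by (cases v) (auto simp: TE_def)

locale Jset =
  fixes N n :: nat and lam :: "nat \<Rightarrow> nat" and J :: "nat \<Rightarrow> nat set" and a k l :: nat
  assumes fin: "\<And>m. finite (PP J m)"
    and card: "\<And>m. m \<in> {1..N} \<Longrightarrow> card (PP J m) = lsum lam m"
    and PPN: "PP J N = {1..n}"
    and a: "a \<in> {1..n-1}"
    and k: "k \<in> {1..N}" and l: "l \<in> {1..N}"
    and ak: "\<And>m. m \<in> {1..N} \<Longrightarrow> a \<in> PP J m \<longleftrightarrow> k \<le> m"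
    and al: "\<And>m. m \<in> {1..N} \<Longrightarrow> Suc a \<in> PP J m \<longleftrightarrow> l \<le> m"
begin

definition s :: "nat \<Rightarrow> nat" where "s = transpose a (Suc a)"
definition J' :: "nat \<Rightarrow> nat set" where "J' j = s ` J j"

lemma s_invol[simp]: "s (s p) = p" by (simp add: s_def)
lemma s_inj: "inj s" by (metis s_invol injI)

lemma PP': "PP J' m = s ` PP J m"
  by (auto simp: PP_def J'_def)

lemma fin': "finite (PP J' m)" using fin by (simp add: PP')

lemma card': "m \<in> {1..N} \<Longrightarrow> card (PP J' m) = lsum lam m"
  using card[of m] s_inj by (simp add: PP' card_image inj_on_subset)

lemma aSa: "a \<in> {1..n}" "Suc a \<in> {1..n}" using a by auto

lemma s_range: "p \<in> {1..n} \<Longrightarrow> s p \<in> {1..n}"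
  using aSa by (auto simp: s_def transpose_def)

lemma PPN': "PP J' N = {1..n}"
proof -
  have "s ` {1..n} = {1..n}"
  proof
    show "s ` {1..n} \<subseteq> {1..n}" using s_range by auto
    show "{1..n} \<subseteq> s ` {1..n}"
    proof
      fix p assume "p \<in> {1..n}"
      then show "p \<in> s ` {1..n}" using s_range[of p] s_invol[of p] by (metis image_eqI)
    qed
  qed
  then show ?thesis by (simp add: PP' PPN)
qed

lemma VV': "VV N J' = Sn a ` VV N J"
proof -
  have "VV N J' = {(m, q). m \<in> {1..N} \<and> q \<in> s ` PP J m}" by (auto simp: VV_def PP')
  also have "\<dots> = Sn a ` VV N J"
  proof
    show "{(m, q). m \<in> {1..N} \<and> q \<in> s ` PP J m} \<subseteq> Sn a ` VV N J"
    proof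
      fix v assume "v \<in> {(m, q). m \<in> {1..N} \<and> q \<in> s ` PP J m}"
      then obtain m p where "v = (m, s p)" "m \<in> {1..N}" "p \<in> PP J m" by auto
      then show "v \<in> Sn a ` VV N J"
        by (intro image_eqI[of _ _ "(m,p)"]) (auto simp: Sn_def s_def VV_def)
    qed
    show "Sn a ` VV N J \<subseteq> {(m, q). m \<in> {1..N} \<and> q \<in> s ` PP J m}"
      by (auto simp: Sn_def s_def VV_def)
  qed
  finally show ?thesis .
qed

definition tau :: "nat \<Rightarrow> nat \<Rightarrow> nat" where
  "tau m = (\<lambda>c. if c \<in> {1..lsum lam m} then idx J m (s (pidx J' m c)) else c)"

lemma tau_permutes:
  assumes m: "m \<in> {1..N}"
  shows "tau m permutes {1..lsum lam m}"
proof -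
  have b1: "bij_betw (pidx J' m) {1..lsum lam m} (PP J' m)"
    using pidx_bij[OF fin'] card'[OF m] by metis
  have b2: "bij_betw s (PP J' m) (PP J m)"
  proof -
    have "s ` PP J' m = PP J m" by (simp add: PP' image_image)
    moreover have "inj_on s (PP J' m)" by (rule inj_on_subset[OF s_inj]) simp
    ultimately show ?thesis by (simp add: bij_betw_def)
  qed
  have b3: "bij_betw (idx J m) (PP J m) {1..lsum lam m}"
    using idx_bij[OF fin] card[OF m] by metis
  have "bij_betw (idx J m \<circ> (s \<circ> pidx J' m)) {1..lsum lam m} {1..lsum lam m}"
    by (rule bij_betw_trans[OF bij_betw_trans[OF b1 b2] b3])
  then have "bij_betw (tau m) {1..lsum lam m} {1..lsum lam m}"
    by (rule bij_betw_cong[THEN iffD1, rotated]) (simp add: tau_def)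
  then show ?thesis by (rule bij_imp_permutes) (auto simp: tau_def)
qed

lemma Yv'_Sn:
  assumes v: "v \<in> VV N J"
  shows "Yv N J' t u' (Mre N tau \<rho>) (Sn a v)
     = (if fst v = N then u' (s (snd v)) else Yv N J t u \<rho> v)"
proof -
  obtain m p where vmp: "v = (m,p)" by (cases v)
  have m: "m \<in> {1..N}" and p: "p \<in> PP J m" using v vmp by (auto simp: VV_def)
  have Snv: "Sn a v = (m, s p)" by (simp add: vmp Sn_def s_def)
  show ?thesis
  proof (cases "m = N")
    case True
    have "p \<in> {1..n}" using p True PPN by simp
    then have "s p \<in> {1..n}" by (rule s_range)
    then show ?thesis using True Snv Yv_N[OF PPN', of "s p" t u' "Mre N tau \<rho>"] by (simp add: vmp)
  next
    case False
    then have m': "m \<in> {1..N-1}" using m by auto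
    have sp: "s p \<in> PP J' m" using p by (simp add: PP')
    have i: "idx J' m (s p) \<in> {1..lsum lam m}" using pidx_idx(2)[OF fin' sp] card'[OF m] by simp
    have "tau m (idx J' m (s p)) = idx J m p"
      using i pidx_idx(1)[OF fin' sp] by (simp add: tau_def)
    then show ?thesis using False m' Snv
      by (simp add: vmp Yv_lt Mre_def)
  qed
qed

lemma W'_formula:
  "Wfun N lam J' t u' h = (1 - h) ^ (\<Sum>k=1..N-1. lsum lam k)
     * (\<Sum>\<rho>\<in>symperms N lam. NPS h N (VV N J) a (\<lambda>v. if fst v = N then u' (s (snd v)) else Yv N J t u \<rho> v))"
proof -
  have "(\<Sum>\<rho>\<in>symperms N lam. NP h N (VV N J') (Yv N J' t u' \<rho>))
      = (\<Sum>\<rho>\<in>symperms N lam. NP h N (VV N J') (Yv N J' t u' (Mre N tau \<rho>)))"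
    by (rule symperms_reindex) (rule tau_permutes, auto)
  also have "\<dots> = (\<Sum>\<rho>\<in>symperms N lam. NPS h N (VV N J) a (\<lambda>v. if fst v = N then u' (s (snd v)) else Yv N J t u \<rho> v))"
  proof (rule sum.cong[OF refl])
    fix \<rho>
    have "NP h N (VV N J') (Yv N J' t u' (Mre N tau \<rho>))
      = (\<Prod>v\<in>VV N J. \<Prod>w\<in>VV N J. cc h N (Sn a v) (Sn a w) (Yv N J' t u' (Mre N tau \<rho>) (Sn a v)) (Yv N J' t u' (Mre N tau \<rho>) (Sn a w)))"
      unfolding VV' by (rule NP_reindex[OF Sn_inj])
    also have "\<dots> = NPS h N (VV N J) a (\<lambda>v. if fst v = N then u' (s (snd v)) else Yv N J t u \<rho> v)"
      unfolding NPS_def by (intro prod.cong refl) (simp add: Yv'_Sn[where u=u])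
    finally show "NP h N (VV N J') (Yv N J' t u' (Mre N tau \<rho>)) = NPS h N (VV N J) a (\<lambda>v. if fst v = N then u' (s (snd v)) else Yv N J t u \<rho> v)" .
  qed
  finally show ?thesis using W_sum[OF fin' card', where t=t and u=u' and h=h] by simp
qed

lemma k1: "1 \<le> k" "k \<le> N" using k by auto
lemma l1: "1 \<le> l" "l \<le> N" using l by auto

lemma Lset_VV: "Lset (VV N J) a = (\<lambda>m. (m,a)) ` {k..N} \<union> (\<lambda>m. (m,Suc a)) ` {l..N}"
proof
  show "Lset (VV N J) a \<subseteq> (\<lambda>m. (m,a)) ` {k..N} \<union> (\<lambda>m. (m,Suc a)) ` {l..N}"
  proof
    fix v assume v: "v \<in> Lset (VV N J) a"
    obtain m p where vmp: "v = (m,p)" by (cases v)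
    have m: "m \<in> {1..N}" and p: "p \<in> PP J m" and pa: "p = a \<or> p = Suc a"
      using v vmp by (auto simp: Lset_def VV_def)
    show "v \<in> (\<lambda>m. (m,a)) ` {k..N} \<union> (\<lambda>m. (m,Suc a)) ` {l..N}"
      using pa ak[OF m] al[OF m] p m by (auto simp: vmp)
  qed
  show "(\<lambda>m. (m,a)) ` {k..N} \<union> (\<lambda>m. (m,Suc a)) ` {l..N} \<subseteq> Lset (VV N J) a"
  proof
    fix v assume "v \<in> (\<lambda>m. (m,a)) ` {k..N} \<union> (\<lambda>m. (m,Suc a)) ` {l..N}"
    then consider m where "v = (m,a)" "m \<in> {k..N}" | m where "v = (m,Suc a)" "m \<in> {l..N}" by auto
    then show "v \<in> Lset (VV N J) a"
    proof cases
      case 1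
      then have "m \<in> {1..N}" using k1 by auto
      then show ?thesis using 1 ak by (auto simp: Lset_def VV_def)
    next
      case 2
      then have "m \<in> {1..N}" using l1 by auto
      then show ?thesis using 2 al by (auto simp: Lset_def VV_def)
    qed
  qed
qed

lemma Loc_LF: "Loc h N (VV N J) a y = LF h N k l (\<lambda>m. y (m,a)) (\<lambda>m. y (m,Suc a))"
  unfolding Loc_def Lset_VV by (rule Loc_formula)

lemma LocS_LF: "LocS h N (VV N J) a y = LF h N l k (\<lambda>m. y (m,Suc a)) (\<lambda>m. y (m,a))"
proof -
  define L where "L = (\<lambda>m. (m,a)) ` {k..N} \<union> (\<lambda>m. (m,Suc a)) ` {l..N}"
  have SL: "Sn a ` L = (\<lambda>m. (m,a)) ` {l..N} \<union> (\<lambda>m. (m,Suc a)) ` {k..N}"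
    unfolding L_def by (auto simp: Sn_def image_Un image_image)
  have "LocS h N (VV N J) a y = (\<Prod>v\<in>L. \<Prod>w\<in>L. cc h N (Sn a v) (Sn a w) (y v) (y w))"
    unfolding LocS_def Lset_VV L_def ..
  also have "\<dots> = (\<Prod>v\<in>L. \<Prod>w\<in>L. cc h N (Sn a v) (Sn a w) (y (Sn a (Sn a v))) (y (Sn a (Sn a w))))"
    by (simp add: Sn_invol)
  also have "\<dots> = (\<Prod>v\<in>Sn a ` L. \<Prod>w\<in>Sn a ` L. cc h N v w (y (Sn a v)) (y (Sn a w)))"
    by (rule prod2_reindex[OF Sn_inj, symmetric])
  also have "\<dots> = LF h N l k (\<lambda>m. y (Sn a (m,a))) (\<lambda>m. y (Sn a (m,Suc a)))"
    unfolding SL by (rule Loc_formula[where y="\<lambda>v. y (Sn a v)"])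
  also have "\<dots> = LF h N l k (\<lambda>m. y (m,Suc a)) (\<lambda>m. y (m,a))"
    by (simp add: Sn_def)
  finally show ?thesis .
qed

lemma sw_TE:
  "(\<lambda>m. (y \<circ> TE E a) (m,a)) = sw E (\<lambda>m. y (m,a)) (\<lambda>m. y (m,Suc a))"
  "(\<lambda>m. (y \<circ> TE E a) (m,Suc a)) = sw E (\<lambda>m. y (m,Suc a)) (\<lambda>m. y (m,a))"
  by (auto simp: fun_eq_iff TE_def sw_def)

lemma sw_insert: "N \<notin> E \<Longrightarrow> sw (insert N E) X Y = sw E (X(N := Y N)) (Y(N := X N))"
  by (auto simp: fun_eq_iff sw_def)

definition BB where "BB = {max k l..<N}"

lemma BB_sub: "BB \<subseteq> {1..N-1}" using k1 l1 by (auto simp: BB_def)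

lemma BB_both: "m \<in> BB \<Longrightarrow> a \<in> PP J m \<and> Suc a \<in> PP J m"
proof -
  assume m: "m \<in> BB"
  then have "m \<in> {1..N}" "k \<le> m" "l \<le> m" using k1 l1 by (auto simp: BB_def)
  then show ?thesis using ak al by auto
qed

lemma finVV: "finite (VV N J)" using fin by (simp add: VV_def)

lemma TE_VV:
  assumes "E \<subseteq> BB \<union> {N}"
  shows "TE E a ` VV N J = VV N J"
proof (rule TE_image)
  fix m assume "m \<in> E"
  then have "m \<in> BB \<or> m = N" using assms by auto
  then show "a \<in> PP J m \<longleftrightarrow> Suc a \<in> PP J m"
    using BB_both PPN aSa by auto
qed

lemma Rest_TE:
  assumes "E \<subseteq> BB \<union> {N}"
  shows "Rest h N (VV N J) a (y \<circ> TE E a) = Rest h N (VV N J) a y"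
  by (rule Rest_T[OF finVV TE_VV[OF assms] TE_inj TE_props(1) TE_props(2) TE_props(3)])

lemma sums_local:
  fixes y :: "nat \<times> nat \<Rightarrow> complex"
  defines "X \<equiv> (\<lambda>m. y (m,a))" and "Y \<equiv> (\<lambda>m. y (m,Suc a))"
  shows "(\<Sum>E\<in>Pow BB. NP h N (VV N J) (y \<circ> TE E a))
        = Rest h N (VV N J) a y * (\<Sum>E\<in>Pow BB. LF h N k l (sw E X Y) (sw E Y X))"
    and "(\<Sum>E\<in>Pow BB. NPS h N (VV N J) a (y \<circ> TE E a))
        = Rest h N (VV N J) a y * (\<Sum>E\<in>Pow BB. LF h N l k (sw E Y X) (sw E X Y))"
    and "(\<Sum>E\<in>Pow BB. NPS h N (VV N J) a (y \<circ> TE E a \<circ> TE {N} a))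
        = Rest h N (VV N J) a y * (\<Sum>E\<in>Pow BB. LF h N l k (sw E (Y(N := X N)) (X(N := Y N))) (sw E (X(N := Y N)) (Y(N := X N))))"
proof -
  show "(\<Sum>E\<in>Pow BB. NP h N (VV N J) (y \<circ> TE E a))
        = Rest h N (VV N J) a y * (\<Sum>E\<in>Pow BB. LF h N k l (sw E X Y) (sw E Y X))"
    unfolding sum_distrib_left
  proof (rule sum.cong[OF refl])
    fix E assume "E \<in> Pow BB"
    then have E: "E \<subseteq> BB \<union> {N}" by auto
    show "NP h N (VV N J) (y \<circ> TE E a) = Rest h N (VV N J) a y * LF h N k l (sw E X Y) (sw E Y X)"
      unfolding NP_split[OF finVV, where a=a] Rest_TE[OF E] Loc_LF sw_TE X_def Y_def by simp
  qed
  show "(\<Sum>E\<in>Pow BB. NPS h N (VV N J) a (y \<circ> TE E a))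
        = Rest h N (VV N J) a y * (\<Sum>E\<in>Pow BB. LF h N l k (sw E Y X) (sw E X Y))"
    unfolding sum_distrib_left
  proof (rule sum.cong[OF refl])
    fix E assume "E \<in> Pow BB"
    then have E: "E \<subseteq> BB \<union> {N}" by auto
    show "NPS h N (VV N J) a (y \<circ> TE E a) = Rest h N (VV N J) a y * LF h N l k (sw E Y X) (sw E X Y)"
      unfolding NPS_split[OF finVV] Rest_TE[OF E] LocS_LF sw_TE X_def Y_def by simp
  qed
  show "(\<Sum>E\<in>Pow BB. NPS h N (VV N J) a (y \<circ> TE E a \<circ> TE {N} a))
        = Rest h N (VV N J) a y * (\<Sum>E\<in>Pow BB. LF h N l k (sw E (Y(N := X N)) (X(N := Y N))) (sw E (X(N := Y N)) (Y(N := X N))))"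
    unfolding sum_distrib_left
  proof (rule sum.cong[OF refl])
    fix E assume "E \<in> Pow BB"
    then have E: "insert N E \<subseteq> BB \<union> {N}" and NE: "N \<notin> E" by (auto simp: BB_def)
    have comp: "y \<circ> TE E a \<circ> TE {N} a = y \<circ> TE (insert N E) a"
      using TE_comp_N[OF NE] by (auto simp: fun_eq_iff)
    show "NPS h N (VV N J) a (y \<circ> TE E a \<circ> TE {N} a) = Rest h N (VV N J) a y *
        LF h N l k (sw E (Y(N := X N)) (X(N := Y N))) (sw E (X(N := Y N)) (Y(N := X N)))"
      unfolding comp NPS_split[OF finVV] Rest_TE[OF E] LocS_LF sw_TE sw_insert[OF NE] X_def Y_def by simp
  qed
qed

lemma nd_rho:
  assumes tnz: "\<forall>j\<in>{1..N-1}. \<forall>i\<in>{1..lsum lam j}. t j i \<noteq> 0"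
    and tdist: "\<forall>j\<in>{1..N-1}. \<forall>i\<in>{1..lsum lam j}. \<forall>i'\<in>{1..lsum lam j}. i \<noteq> i' \<longrightarrow> t j i \<noteq> t j i'"
    and r: "\<rho> \<in> symperms N lam" and m: "m \<in> BB"
  shows "Yv N J t u \<rho> (m,a) \<noteq> 0 \<and> Yv N J t u \<rho> (m,Suc a) \<noteq> 0 \<and> Yv N J t u \<rho> (m,a) \<noteq> Yv N J t u \<rho> (m,Suc a)"
proof -
  have m1: "m \<in> {1..N-1}" using m BB_sub by auto
  then have mN: "m \<noteq> N" and m2: "m \<in> {1..N}" by auto
  have perm: "\<rho> m permutes {1..lsum lam m}" using r m1 by (simp add: symperms_def)
  have both: "a \<in> PP J m" "Suc a \<in> PP J m" using BB_both[OF m] by auto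
  have ia: "idx J m a \<in> {1..lsum lam m}" "idx J m (Suc a) \<in> {1..lsum lam m}"
    using pidx_idx(2)[OF fin both(1)] pidx_idx(2)[OF fin both(2)] card[OF m2] by auto
  have "idx J m a \<noteq> idx J m (Suc a)"
  proof
    assume "idx J m a = idx J m (Suc a)"
    then have "pidx J m (idx J m a) = pidx J m (idx J m (Suc a))" by simp
    then show False using pidx_idx(1)[OF fin both(1)] pidx_idx(1)[OF fin both(2)] by simp
  qed
  then have ne: "\<rho> m (idx J m a) \<noteq> \<rho> m (idx J m (Suc a))"
    using permutes_inj[OF perm] by (auto dest: injD)
  have im: "\<rho> m (idx J m a) \<in> {1..lsum lam m}" "\<rho> m (idx J m (Suc a)) \<in> {1..lsum lam m}"
    using ia permutes_in_image[OF perm] by auto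
  show ?thesis using tnz tdist m1 im ne mN by (simp add: Yv_lt)
qed

lemma main_J:
  fixes t :: "nat \<Rightarrow> nat \<Rightarrow> complex" and u :: "nat \<Rightarrow> complex" and h :: complex
  assumes tnz: "\<forall>j\<in>{1..N-1}. \<forall>i\<in>{1..lsum lam j}. t j i \<noteq> 0"
    and tdist: "\<forall>j\<in>{1..N-1}. \<forall>i\<in>{1..lsum lam j}. \<forall>i'\<in>{1..lsum lam j}. i \<noteq> i' \<longrightarrow> t j i \<noteq> t j i'"
    and unz: "\<forall>i\<in>{1..n}. u i \<noteq> 0"
    and D: "1 - h * (u a / u (Suc a)) \<noteq> 0"
  defines "w \<equiv> u a / u (Suc a)"
  shows "(k = l \<longrightarrow> Wfun N lam J' t (\<lambda>p. u (s p)) h = Wfun N lam J t u h)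
       \<and> (k < l \<longrightarrow> Wfun N lam J' t (\<lambda>p. u (s p)) h =
            h * (1 - w) / (1 - h * w) * Wfun N lam J t u h + (1 - h) / (1 - h * w) * Wfun N lam J' t u h)
       \<and> (k > l \<longrightarrow> Wfun N lam J' t (\<lambda>p. u (s p)) h =
            (1 - w) / (1 - h * w) * Wfun N lam J t u h + (1 - h) * w / (1 - h * w) * Wfun N lam J' t u h)"
proof -
  define C0 where "C0 = (1 - h) ^ (\<Sum>k=1..N-1. lsum lam k)"
  define V where "V = VV N J"
  define Yr where "Yr \<rho> = Yv N J t u \<rho>" for \<rho>
  define S0 where "S0 = (\<Sum>\<rho>\<in>symperms N lam. NP h N V (Yr \<rho>))"
  define S1 where "S1 = (\<Sum>\<rho>\<in>symperms N lam. NPS h N V a (Yr \<rho>))"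
  define S2 where "S2 = (\<Sum>\<rho>\<in>symperms N lam. NPS h N V a (Yr \<rho> \<circ> TE {N} a))"
  have W0: "Wfun N lam J t u h = C0 * S0"
    unfolding C0_def S0_def V_def Yr_def by (rule W_sum[OF fin card])
  have W1: "Wfun N lam J' t (\<lambda>p. u (s p)) h = C0 * S1"
  proof -
    have "NPS h N V a (\<lambda>v. if fst v = N then u (s (s (snd v))) else Yv N J t u \<rho> v) = NPS h N V a (Yr \<rho>)" for \<rho>
    proof (rule NPS_cong)
      fix v assume "v \<in> V"
      then show "(if fst v = N then u (s (s (snd v))) else Yv N J t u \<rho> v) = Yr \<rho> v"
        using Yv_N[OF PPN] PPN by (cases v) (auto simp: V_def VV_def Yr_def)
    qed
    then show ?thesis using W'_formula[where u'="\<lambda>p. u (s p)" and t=t and h=h and u=u]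
      by (simp add: C0_def S1_def V_def)
  qed
  have W2: "Wfun N lam J' t u h = C0 * S2"
  proof -
    have "NPS h N V a (\<lambda>v. if fst v = N then u (s (snd v)) else Yv N J t u \<rho> v) = NPS h N V a (Yr \<rho> \<circ> TE {N} a)" for \<rho>
    proof (rule NPS_cong)
      fix v assume v: "v \<in> V"
      obtain m p where vmp: "v = (m,p)" by (cases v)
      show "(if fst v = N then u (s (snd v)) else Yv N J t u \<rho> v) = (Yr \<rho> \<circ> TE {N} a) v"
      proof (cases "m = N")
        case True
        then have "p \<in> {1..n}" using v vmp PPN by (auto simp: V_def VV_def)
        then have "s p \<in> {1..n}" by (rule s_range)
        then show ?thesis using True Yv_N[OF PPN] by (simp add: vmp Yr_def TE_def s_def)
      qed (simp add: vmp Yr_def TE_def)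
    qed
    then show ?thesis using W'_formula[where u'=u and t=t and h=h and u=u]
      by (simp add: C0_def S2_def V_def)
  qed
  define cP :: complex where "cP = of_nat (card (Pow BB))"
  have cP0: "cP \<noteq> 0" by (simp add: cP_def BB_def card_Pow)
  define X where "X \<rho> = (\<lambda>m. Yr \<rho> (m,a))" for \<rho>
  define Y where "Y \<rho> = (\<lambda>m. Yr \<rho> (m,Suc a))" for \<rho>
  define R where "R \<rho> = (\<Sum>E\<in>Pow BB. LF h N k l (sw E (X \<rho>) (Y \<rho>)) (sw E (Y \<rho>) (X \<rho>)))" for \<rho>
  define Q1 where "Q1 \<rho> = (\<Sum>E\<in>Pow BB. LF h N l k (sw E (Y \<rho>) (X \<rho>)) (sw E (X \<rho>) (Y \<rho>)))" for \<rho>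
  define Q2 where "Q2 \<rho> = (\<Sum>E\<in>Pow BB. LF h N l k (sw E ((Y \<rho>)(N := X \<rho> N)) ((X \<rho>)(N := Y \<rho> N))) (sw E ((X \<rho>)(N := Y \<rho> N)) ((Y \<rho>)(N := X \<rho> N))))" for \<rho>
  define Rs where "Rs \<rho> = Rest h N V a (Yr \<rho>)" for \<rho>
  have T0: "cP * S0 = (\<Sum>\<rho>\<in>symperms N lam. Rs \<rho> * R \<rho>)"
  proof -
    have "cP * S0 = (\<Sum>\<rho>\<in>symperms N lam. \<Sum>E\<in>Pow BB. NP h N V (Yr \<rho> \<circ> TE E a))"
      unfolding cP_def S0_def Yr_def V_def by (rule avg[OF fin card BB_sub BB_both NP_cong])
    also have "\<dots> = (\<Sum>\<rho>\<in>symperms N lam. Rs \<rho> * R \<rho>)"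
      unfolding V_def Rs_def R_def X_def Y_def by (intro sum.cong refl sums_local(1))
    finally show ?thesis .
  qed
  have T1: "cP * S1 = (\<Sum>\<rho>\<in>symperms N lam. Rs \<rho> * Q1 \<rho>)"
  proof -
    have "cP * S1 = (\<Sum>\<rho>\<in>symperms N lam. \<Sum>E\<in>Pow BB. NPS h N V a (Yr \<rho> \<circ> TE E a))"
      unfolding cP_def S1_def Yr_def V_def by (rule avg[OF fin card BB_sub BB_both NPS_cong])
    also have "\<dots> = (\<Sum>\<rho>\<in>symperms N lam. Rs \<rho> * Q1 \<rho>)"
      unfolding V_def Rs_def Q1_def X_def Y_def by (intro sum.cong refl sums_local(2))
    finally show ?thesis .
  qed
  have T2: "cP * S2 = (\<Sum>\<rho>\<in>symperms N lam. Rs \<rho> * Q2 \<rho>)"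
  proof -
    have resp: "NPS h N V a (y \<circ> TE {N} a) = NPS h N V a (y' \<circ> TE {N} a)"
      if "\<And>v. v \<in> VV N J \<Longrightarrow> y v = y' v" for y y'
    proof (rule NPS_cong)
      fix v assume "v \<in> V"
      then have "TE {N} a v \<in> VV N J" using TE_VV[of "{N}"] by (auto simp: V_def)
      then show "(y \<circ> TE {N} a) v = (y' \<circ> TE {N} a) v" using that by simp
    qed
    have "cP * S2 = (\<Sum>\<rho>\<in>symperms N lam. \<Sum>E\<in>Pow BB. NPS h N V a (Yr \<rho> \<circ> TE E a \<circ> TE {N} a))"
      unfolding cP_def S2_def Yr_def
      by (rule avg[where G="\<lambda>y. NPS h N V a (y \<circ> TE {N} a)", OF fin card BB_sub BB_both resp])
    also have "\<dots> = (\<Sum>\<rho>\<in>symperms N lam. Rs \<rho> * Q2 \<rho>)"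
      unfolding V_def Rs_def Q2_def X_def Y_def by (intro sum.cong refl sums_local(3))
    finally show ?thesis .
  qed
  have XN: "X \<rho> N = u a" and YN: "Y \<rho> N = u (Suc a)" for \<rho>
    using Yv_N[OF PPN aSa(1)] Yv_N[OF PPN aSa(2)] by (simp_all add: X_def Y_def Yr_def)
  have nd: "X \<rho> m \<noteq> 0 \<and> Y \<rho> m \<noteq> 0 \<and> X \<rho> m \<noteq> Y \<rho> m" if "\<rho> \<in> symperms N lam" "m \<in> BB" for \<rho> m
    using nd_rho[OF tnz tdist that] by (simp add: X_def Y_def Yr_def)
  have ua: "u a \<noteq> 0" "u (Suc a) \<noteq> 0" using unz aSa by auto
  have Dd: "u (Suc a) - h * u a \<noteq> 0"
  proof
    assume "u (Suc a) - h * u a = 0"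
    then have "1 - h * (u a / u (Suc a)) = 0" using ua by (simp add: field_simps)
    then show False using D by simp
  qed
  show ?thesis
  proof (intro conjI impI)
    assume kl: "k = l"
    have BBk: "BB = {k..<N}" unfolding BB_def using kl by simp
    have "Q1 \<rho> = R \<rho>" if r: "\<rho> \<in> symperms N lam" for \<rho>
      unfolding Q1_def R_def BBk unfolding kl[symmetric]
      by (rule case_eq) (use k1 nd[OF r] in \<open>auto simp: BBk\<close>)
    then have "cP * S1 = cP * S0" unfolding T0 T1 by (simp cong: sum.cong)
    then show "Wfun N lam J' t (\<lambda>p. u (s p)) h = Wfun N lam J t u h"
      using cP0 W0 W1 by simp
  next
    assume kl: "k < l"
    have "(u (Suc a) - h * u a) * Q1 \<rho> = h * (u (Suc a) - u a) * R \<rho> + (1 - h) * u (Suc a) * Q2 \<rho>"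
      if r: "\<rho> \<in> symperms N lam" for \<rho>
    proof -
      have m: "BB = {l..<N}" unfolding BB_def using kl by simp
      show ?thesis
        unfolding Q1_def R_def Q2_def m XN[symmetric, of \<rho>] YN[symmetric, of \<rho>]
        by (rule case_lt[OF kl l1(2)]) (use nd[OF r] in \<open>auto simp: m\<close>)
    qed
    then have rel: "(u (Suc a) - h * u a) * Q1 \<rho> = h * (u (Suc a) - u a) * R \<rho> + (1 - h) * u (Suc a) * Q2 \<rho>"
      if "\<rho> \<in> symperms N lam" for \<rho> using that by blast
    have "(u (Suc a) - h * u a) * (cP * S1) = (\<Sum>\<rho>\<in>symperms N lam. Rs \<rho> * ((u (Suc a) - h * u a) * Q1 \<rho>))"
      unfolding T1 by (simp add: sum_distrib_left mult.left_commute)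
    also have "\<dots> = (\<Sum>\<rho>\<in>symperms N lam. Rs \<rho> * (h * (u (Suc a) - u a) * R \<rho> + (1 - h) * u (Suc a) * Q2 \<rho>))"
      using rel by (intro sum.cong refl) simp
    also have "\<dots> = (\<Sum>\<rho>\<in>symperms N lam. h * (u (Suc a) - u a) * (Rs \<rho> * R \<rho>) + (1 - h) * u (Suc a) * (Rs \<rho> * Q2 \<rho>))"
      by (intro sum.cong refl) (simp add: algebra_simps)
    also have "\<dots> = h * (u (Suc a) - u a) * (cP * S0) + (1 - h) * u (Suc a) * (cP * S2)"
      unfolding T0 T2 by (simp add: sum.distrib sum_distrib_left)
    finally have "(u (Suc a) - h * u a) * (cP * S1) = h * (u (Suc a) - u a) * (cP * S0) + (1 - h) * u (Suc a) * (cP * S2)" .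
    then have "cP * ((u (Suc a) - h * u a) * S1) = cP * (h * (u (Suc a) - u a) * S0 + (1 - h) * u (Suc a) * S2)"
      by (simp add: algebra_simps)
    then have "(u (Suc a) - h * u a) * S1 = h * (u (Suc a) - u a) * S0 + (1 - h) * u (Suc a) * S2"
      using cP0 by simp
    then have e: "S1 = (h * (u (Suc a) - u a) * S0 + (1 - h) * u (Suc a) * S2) / (u (Suc a) - h * u a)"
      using Dd by (metis nonzero_mult_div_cancel_left)
    have c1: "h * (1 - w) / (1 - h * w) = h * (u (Suc a) - u a) / (u (Suc a) - h * u a)"
      unfolding w_def using ua Dd by (simp add: field_simps)
    have c2: "(1 - h) / (1 - h * w) = (1 - h) * u (Suc a) / (u (Suc a) - h * u a)"
      unfolding w_def using ua Dd by (simp add: field_simps)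
    have "S1 = h * (1 - w) / (1 - h * w) * S0 + (1 - h) / (1 - h * w) * S2"
      unfolding c1 c2 e by (simp add: add_divide_distrib)
    then show "Wfun N lam J' t (\<lambda>p. u (s p)) h =
            h * (1 - w) / (1 - h * w) * Wfun N lam J t u h + (1 - h) / (1 - h * w) * Wfun N lam J' t u h"
      unfolding W0 W1 W2 by (simp add: algebra_simps)
  next
    assume kl: "l < k"
    have "(u (Suc a) - h * u a) * Q1 \<rho> = (u (Suc a) - u a) * R \<rho> + (1 - h) * u a * Q2 \<rho>"
      if r: "\<rho> \<in> symperms N lam" for \<rho>
    proof -
      have m: "BB = {k..<N}" unfolding BB_def using kl by simp
      show ?thesis
        unfolding Q1_def R_def Q2_def m XN[symmetric, of \<rho>] YN[symmetric, of \<rho>]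
        by (rule case_gt[OF kl k1(2)]) (use nd[OF r] in \<open>auto simp: m\<close>)
    qed
    then have rel: "(u (Suc a) - h * u a) * Q1 \<rho> = (u (Suc a) - u a) * R \<rho> + (1 - h) * u a * Q2 \<rho>"
      if "\<rho> \<in> symperms N lam" for \<rho> using that by blast
    have "(u (Suc a) - h * u a) * (cP * S1) = (\<Sum>\<rho>\<in>symperms N lam. Rs \<rho> * ((u (Suc a) - h * u a) * Q1 \<rho>))"
      unfolding T1 by (simp add: sum_distrib_left mult.left_commute)
    also have "\<dots> = (\<Sum>\<rho>\<in>symperms N lam. Rs \<rho> * ((u (Suc a) - u a) * R \<rho> + (1 - h) * u a * Q2 \<rho>))"
      using rel by (intro sum.cong refl) simp
    also have "\<dots> = (\<Sum>\<rho>\<in>symperms N lam. (u (Suc a) - u a) * (Rs \<rho> * R \<rho>) + (1 - h) * u a * (Rs \<rho> * Q2 \<rho>))"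
      by (intro sum.cong refl) (simp add: algebra_simps)
    also have "\<dots> = (u (Suc a) - u a) * (cP * S0) + (1 - h) * u a * (cP * S2)"
      unfolding T0 T2 by (simp add: sum.distrib sum_distrib_left)
    finally have "(u (Suc a) - h * u a) * (cP * S1) = (u (Suc a) - u a) * (cP * S0) + (1 - h) * u a * (cP * S2)" .
    then have "cP * ((u (Suc a) - h * u a) * S1) = cP * ((u (Suc a) - u a) * S0 + (1 - h) * u a * S2)"
      by (simp add: algebra_simps)
    then have "(u (Suc a) - h * u a) * S1 = (u (Suc a) - u a) * S0 + (1 - h) * u a * S2"
      using cP0 by simp
    then have e: "S1 = ((u (Suc a) - u a) * S0 + (1 - h) * u a * S2) / (u (Suc a) - h * u a)"
      using Dd by (metis nonzero_mult_div_cancel_left)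
    have c1: "(1 - w) / (1 - h * w) = (u (Suc a) - u a) / (u (Suc a) - h * u a)"
      unfolding w_def using ua Dd by (simp add: field_simps)
    have c2: "(1 - h) * w / (1 - h * w) = (1 - h) * u a / (u (Suc a) - h * u a)"
      unfolding w_def using ua Dd by (simp add: field_simps)
    have "S1 = (1 - w) / (1 - h * w) * S0 + (1 - h) * w / (1 - h * w) * S2"
      unfolding c1 c2 e by (simp add: add_divide_distrib)
    then show "Wfun N lam J' t (\<lambda>p. u (s p)) h =
            (1 - w) / (1 - h * w) * Wfun N lam J t u h + (1 - h) * w / (1 - h * w) * Wfun N lam J' t u h"
      unfolding W0 W1 W2 by (simp add: algebra_simps)
  qed
qed

end




lemma mem_inv_image:
  assumes "bij f"
  shows "x \<in> inv f ` A \<longleftrightarrow> f x \<in> A"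
proof
  assume "x \<in> inv f ` A"
  then obtain y where "y \<in> A" "x = inv f y" by auto
  then show "f x \<in> A" using assms by (simp add: bij_inv_eq_iff)
next
  assume "f x \<in> A"
  moreover have "x = inv f (f x)" using assms by (simp add: bij_is_inj)
  ultimately show "x \<in> inv f ` A" by blast
qed

lemma J_facts:
  assumes sig: "\<sigma> permutes {1..n}" and I: "I \<in> ordpart N n lam"
  defines "J \<equiv> (\<lambda>j. inv \<sigma> ` I j)"
  shows "\<And>m. finite (PP J m)"
    and "\<And>m. m \<in> {1..N} \<Longrightarrow> card (PP J m) = lsum lam m"
    and "PP J N = {1..n}"
    and "\<And>m x j0. \<sigma> x \<in> I j0 \<Longrightarrow> j0 \<in> {1..N} \<Longrightarrow> m \<in> {1..N} \<Longrightarrow> (x \<in> PP J m \<longleftrightarrow> j0 \<le> m)"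
proof -
  have bs: "bij \<sigma>" using sig by (rule permutes_bij)
  have pinv: "inv \<sigma> permutes {1..n}" using sig by (rule permutes_inv)
  have injv: "inj (inv \<sigma>)" using pinv by (rule permutes_inj)
  have Ic: "\<And>j. j \<in> {1..N} \<Longrightarrow> card (I j) = lam j"
    and Ie: "\<And>j. j \<notin> {1..N} \<Longrightarrow> I j = {}"
    and Id: "\<And>i j. i \<in> {1..N} \<Longrightarrow> j \<in> {1..N} \<Longrightarrow> i \<noteq> j \<Longrightarrow> I i \<inter> I j = {}"
    and Iu: "(\<Union>j\<in>{1..N}. I j) = {1..n}"
    using I by (auto simp: ordpart_def)
  have Isub: "I j \<subseteq> {1..n}" for j
  proof (cases "j \<in> {1..N}")
    case True then show ?thesis using Iu by blast
  qed (simp add: Ie)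
  have PPJ: "PP J m = inv \<sigma> ` PP I m" for m by (auto simp: PP_def J_def)
  have PPIsub: "PP I m \<subseteq> {1..n}" for m using Isub by (auto simp: PP_def)
  show fin: "finite (PP J m)" for m
    unfolding PPJ using PPIsub[of m] finite_subset by blast
  show "card (PP J m) = lsum lam m" if m: "m \<in> {1..N}" for m
  proof -
    have "card (PP J m) = card (PP I m)"
      unfolding PPJ by (rule card_image) (rule inj_on_subset[OF injv], simp)
    also have "\<dots> = (\<Sum>j\<in>{1..m}. card (I j))"
      unfolding PP_def
    proof (rule card_UN_disjoint)
      show "finite {1..m}" by simp
      show "\<forall>j\<in>{1..m}. finite (I j)" using Isub finite_subset by blast
      show "\<forall>i\<in>{1..m}. \<forall>j\<in>{1..m}. i \<noteq> j \<longrightarrow> I i \<inter> I j = {}"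
        using Id m by auto
    qed
    also have "\<dots> = (\<Sum>j\<in>{1..m}. lam j)" using Ic m by (intro sum.cong refl) auto
    finally show ?thesis by (simp add: lsum_def)
  qed
  show "PP J N = {1..n}"
  proof -
    have "PP I N = {1..n}" using Iu by (simp add: PP_def)
    then show ?thesis unfolding PPJ using permutes_image[OF pinv] by simp
  qed
  show "x \<in> PP J m \<longleftrightarrow> j0 \<le> m" if x: "\<sigma> x \<in> I j0" and j0: "j0 \<in> {1..N}" and m: "m \<in> {1..N}" for m x j0
  proof -
    have "x \<in> PP J m \<longleftrightarrow> \<sigma> x \<in> PP I m" unfolding PPJ by (rule mem_inv_image[OF bs])
    also have "\<dots> \<longleftrightarrow> j0 \<le> m"
    proof
      assume "\<sigma> x \<in> PP I m"
      then obtain j where j: "j \<in> {1..m}" "\<sigma> x \<in> I j" by (auto simp: PP_def)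
      then have "j \<in> {1..N}" using m by auto
      then have "j = j0" using Id[of j j0] j x j0 by blast
      then show "j0 \<le> m" using j by simp
    next
      assume "j0 \<le> m"
      then show "\<sigma> x \<in> PP I m" using x j0 by (auto simp: PP_def)
    qed
    finally show ?thesis .
  qed
qed

theorem theorem6p10:
  fixes N n a k l :: nat and lam \<sigma> :: "nat \<Rightarrow> nat" and I :: "nat \<Rightarrow> nat set"
    and t :: "nat \<Rightarrow> nat \<Rightarrow> complex" and z :: "nat \<Rightarrow> complex" and h :: complex
  assumes "(\<Sum>j=1..N. lam j) = n"
    and "\<sigma> permutes {1..n}"
    and "a \<in> {1..n-1}"
    and "I \<in> ordpart N n lam"
    and "k \<in> {1..N}" and "l \<in> {1..N}"
    and "\<sigma> a \<in> I k" and "\<sigma> (a+1) \<in> I l"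
    and "\<forall>j\<in>{1..N-1}. \<forall>i\<in>{1..lsum lam j}. t j i \<noteq> 0"
    and "\<forall>j\<in>{1..N-1}. \<forall>i\<in>{1..lsum lam j}. \<forall>i'\<in>{1..lsum lam j}. i \<noteq> i' \<longrightarrow> t j i \<noteq> t j i'"
    and "\<forall>i\<in>{1..n}. z i \<noteq> 0"
    and "1 - h * (z (\<sigma> a) / z (\<sigma> (a+1))) \<noteq> 0"
  shows "let w = z (\<sigma> a) / z (\<sigma> (a+1));
             \<sigma>' = \<sigma> \<circ> transpose a (a+1);
             I' = (\<lambda>j. transpose (\<sigma> a) (\<sigma> (a+1)) ` I j)
         in (k = l \<longrightarrow> Wsig N lam \<sigma>' I t z h = Wsig N lam \<sigma> I t z h)
          \<and> (k < l \<longrightarrow> Wsig N lam \<sigma>' I t z h =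
                h * (1 - w) / (1 - h * w) * Wsig N lam \<sigma> I t z h
                + (1 - h) / (1 - h * w) * Wsig N lam \<sigma> I' t z h)
          \<and> (k > l \<longrightarrow> Wsig N lam \<sigma>' I t z h =
                (1 - w) / (1 - h * w) * Wsig N lam \<sigma> I t z h
                + (1 - h) * w / (1 - h * w) * Wsig N lam \<sigma> I' t z h)"
proof -
  define J where "J = (\<lambda>j. inv \<sigma> ` I j)"
  define u where "u = (\<lambda>p. z (\<sigma> p))"
  note F = J_facts[OF assms(2) assms(4), folded J_def]
  have bs: "bij \<sigma>" using assms(2) by (rule permutes_bij)
  interpret Jset N n lam J a k l
  proof
    show "\<And>m. finite (PP J m)" by (rule F(1))
    show "\<And>m. m \<in> {1..N} \<Longrightarrow> card (PP J m) = lsum lam m" by (rule F(2))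
    show "PP J N = {1..n}" by (rule F(3))
    show "a \<in> {1..n-1}" "k \<in> {1..N}" "l \<in> {1..N}" using assms by auto
    show "\<And>m. m \<in> {1..N} \<Longrightarrow> a \<in> PP J m \<longleftrightarrow> k \<le> m"
      using F(4)[OF assms(7) assms(5)] by blast
    show "\<And>m. m \<in> {1..N} \<Longrightarrow> Suc a \<in> PP J m \<longleftrightarrow> l \<le> m"
      using F(4)[of "Suc a" l] assms(8) assms(6) by simp
  qed
  have unz: "\<forall>i\<in>{1..n}. u i \<noteq> 0"
    using assms(11) permutes_in_image[OF assms(2)] by (simp add: u_def)
  have D: "1 - h * (u a / u (Suc a)) \<noteq> 0" using assms(12) by (simp add: u_def)
  note M = main_J[OF assms(9) assms(10) unz D]
  have J'e: "J' = (\<lambda>j. transpose a (Suc a) ` inv \<sigma> ` I j)"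
    by (simp add: fun_eq_iff J'_def s_def) (simp add: J_def)
  have se: "s = transpose a (Suc a)" by (simp add: s_def)
  have e0: "Wsig N lam \<sigma> I t z h = Wfun N lam J t u h"
    by (simp add: Wsig_def J_def u_def)
  have e1: "Wsig N lam (\<sigma> \<circ> transpose a (a+1)) I t z h = Wfun N lam J' t (\<lambda>p. u (s p)) h"
  proof -
    have "inv (\<sigma> \<circ> transpose a (a+1)) = transpose a (a+1) \<circ> inv \<sigma>"
      using bs by (simp add: o_inv_distrib)
    then have "(\<lambda>j. inv (\<sigma> \<circ> transpose a (a+1)) ` I j) = J'"
      unfolding J'e by (auto simp: fun_eq_iff image_comp)
    then show ?thesis by (simp add: Wsig_def u_def se)
  qed
  have e2: "Wsig N lam \<sigma> (\<lambda>j. transpose (\<sigma> a) (\<sigma> (a+1)) ` I j) t z h = Wfun N lam J' t u h"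
  proof -
    have bi: "bij (inv \<sigma>)" using bs by (rule bij_imp_bij_inv)
    have c: "inv \<sigma> (transpose (\<sigma> a) (\<sigma> (Suc a)) c) = transpose a (Suc a) (inv \<sigma> c)" for c
      using transpose_apply_commute[OF bi, of a "Suc a" c] bs by (simp add: inv_inv_eq)
    have "(\<lambda>j. inv \<sigma> ` transpose (\<sigma> a) (\<sigma> (a+1)) ` I j) = J'"
      unfolding J'e by (auto simp: fun_eq_iff image_comp comp_def c)
    then show ?thesis by (simp add: Wsig_def u_def)
  qed
  show ?thesis
    unfolding Let_def e0 e1 e2 using M by (simp add: u_def)
qed


end
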